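(* Let $\mathcal{C}$ be a Fraïssé class with Fraïssé limit $\mathbf{U}$. Then $\mathcal{C}$ has the HAP and the amalgamated extension property if and only if every retract of $\mathbf{U}$ is induced by a universal homogeneous retraction, i.e. for every retract $\mathbf{B}$ of $\mathbf{U}$ there exists a universal homogeneous retraction $r:\mathbf{U}\twoheadrightarrow\mathbf{B}$.
   Context: An embedding is an injective homomorphism reflecting all relations. An age is a class of finitely generated structures of one signature with countably many isomorphism types, closed under finitely generated substructures (up to isomorphism) and with the joint embedding property; $\overline{\mathcal{C}}$ is the class of countable structures all of whose finitely generated substructures are isomorphic to members of $\mathcal{C}$; a Fraïssé class is an age with the amalgamation property and its Fraïssé limit is the unique countable homogeneous structure with that age. A substructure $\mathbf{B}\le\mathbf{U}$ is a retract if there is an idempotent endomorphism of $\mathbf{U}$ with image $B$; a homomorphism $r:\mathbf{U}\to\mathbf{B}$ is a retraction if some homomorphism $\iota:\mathbf{B}\to\mathbf{U}$ satisfies $r\circ\iota=1_{\mathbf{B}}$. A universal homogeneous retraction $r:\mathbf{U}\twoheadrightarrow\mathbf{B}$ is a retraction such that for every $\mathbf{A}\in\overline{\mathcal{C}}$ and homomorphism $h:\mathbf{A}\to\mathbf{B}$ there is an embedding $\iota:\mathbf{A}\hookrightarrow\mathbf{U}$ with $h=r\circ\iota$, and for every finitely generated $\mathbf{A}\le\mathbf{U}$ and embedding $\iota:\mathbf{A}\hookrightarrow\mathbf{U}$ with $r\circ\iota=r\restriction_A$ there is an automorphism $\alpha$ of $\mathbf{U}$ with $r\circ\alpha=r$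 and $\alpha\restriction_A=\iota$. Amalgamated extension property of $\mathcal{C}$: for all $\mathbf{A},\mathbf{B}_1,\mathbf{B}_2,\mathbf{T}\in\mathcal{C}$, embeddings $f_i:\mathbf{A}\hookrightarrow\mathbf{B}_i$, homomorphisms $h_i:\mathbf{B}_i\to\mathbf{T}$ with $h_1f_1=h_2f_2$, there exist $\mathbf{C},\mathbf{T}'\in\mathcal{C}$, embeddings $g_i:\mathbf{B}_i\hookrightarrow\mathbf{C}$ with $g_1f_1=g_2f_2$, an embedding $k:\mathbf{T}\hookrightarrow\mathbf{T}'$ and a homomorphism $h:\mathbf{C}\to\mathbf{T}'$ with $hg_i=kh_i$. HAP: for all $\mathbf{A},\mathbf{B}_1,\mathbf{B}_2\in\mathcal{C}$, embedding $f_1:\mathbf{A}\hookrightarrow\mathbf{B}_1$ and homomorphism $f_2:\mathbf{A}\to\mathbf{B}_2$, there exist $\mathbf{C}\in\mathcal{C}$, an embedding $g_2:\mathbf{B}_2\hookrightarrow\mathbf{C}$ and a homomorphism $g_1:\mathbf{B}_1\to\mathbf{C}$ with $g_1f_1=g_2f_2$. *)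

theory Defs
  imports Main "HOL-Library.Countable_Set"
begin

text \<open>A structure has a carrier,
an interpretation of each function symbol (only meaningful on argument lists
of the right length with entries in the carrier) and of each relation symbol.\<close>

record ('a, 'f, 'r) struc =
  s_carrier :: "'a set"
  s_fun :: "'f \<Rightarrow> 'a list \<Rightarrow> 'a"
  s_rel :: "'r \<Rightarrow> 'a list set"

definition args :: "nat \<Rightarrow> 'a set \<Rightarrow> 'a list set" where
  "args n S = {xs. length xs = n \<and> set xs \<subseteq> S}"

definition is_struc :: "('f \<Rightarrow> nat) \<Rightarrow> ('r \<Rightarrow> nat) \<Rightarrow> ('a, 'f, 'r) struc \<Rightarrow> bool" where
  "is_struc fa ra A \<longleftrightarrow>
     (\<forall>f. \<forall>xs\<in>args (fa f) (s_carrier A). s_fun A f xs \<in> s_carrier A) \<and>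
     (\<forall>r. s_rel A r \<subseteq> args (ra r) (s_carrier A))"

definition hom :: "('f \<Rightarrow> nat) \<Rightarrow> ('r \<Rightarrow> nat) \<Rightarrow> ('a, 'f, 'r) struc \<Rightarrow> ('b, 'f, 'r) struc
    \<Rightarrow> ('a \<Rightarrow> 'b) \<Rightarrow> bool" where
  "hom fa ra A B h \<longleftrightarrow>
     (\<forall>x\<in>s_carrier A. h x \<in> s_carrier B) \<and>
     (\<forall>f. \<forall>xs\<in>args (fa f) (s_carrier A). h (s_fun A f xs) = s_fun B f (map h xs)) \<and>
     (\<forall>r. \<forall>xs\<in>s_rel A r. map h xs \<in> s_rel B r)"

definition emb :: "('f \<Rightarrow> nat) \<Rightarrow> ('r \<Rightarrow> nat) \<Rightarrow> ('a, 'f, 'r) struc \<Rightarrow> ('b, 'f, 'r) struc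
    \<Rightarrow> ('a \<Rightarrow> 'b) \<Rightarrow> bool" where
  "emb fa ra A B h \<longleftrightarrow>
     hom fa ra A B h \<and> inj_on h (s_carrier A) \<and>
     (\<forall>r. \<forall>xs\<in>args (ra r) (s_carrier A). map h xs \<in> s_rel B r \<longrightarrow> xs \<in> s_rel A r)"

definition iso :: "('f \<Rightarrow> nat) \<Rightarrow> ('r \<Rightarrow> nat) \<Rightarrow> ('a, 'f, 'r) struc \<Rightarrow> ('b, 'f, 'r) struc
    \<Rightarrow> ('a \<Rightarrow> 'b) \<Rightarrow> bool" where
  "iso fa ra A B h \<longleftrightarrow> emb fa ra A B h \<and> h ` s_carrier A = s_carrier B"

definition isomorphic :: "('f \<Rightarrow> nat) \<Rightarrow> ('r \<Rightarrow> nat) \<Rightarrow> ('a, 'f, 'r) struc \<Rightarrow> ('b, 'f, 'r) struc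
    \<Rightarrow> bool" where
  "isomorphic fa ra A B \<longleftrightarrow> (\<exists>h. iso fa ra A B h)"

definition automorphism :: "('f \<Rightarrow> nat) \<Rightarrow> ('r \<Rightarrow> nat) \<Rightarrow> ('a, 'f, 'r) struc \<Rightarrow> ('a \<Rightarrow> 'a) \<Rightarrow> bool" where
  "automorphism fa ra U \<alpha> \<longleftrightarrow> iso fa ra U U \<alpha>"

definition substruc :: "('f \<Rightarrow> nat) \<Rightarrow> ('r \<Rightarrow> nat) \<Rightarrow> ('a, 'f, 'r) struc \<Rightarrow> ('a, 'f, 'r) struc
    \<Rightarrow> bool" where
  "substruc fa ra A B \<longleftrightarrow>
     is_struc fa ra A \<and> s_carrier A \<subseteq> s_carrier B \<and> emb fa ra A B id"

definition fin_gen :: "('f \<Rightarrow> nat) \<Rightarrow> ('r \<Rightarrow> nat) \<Rightarrow> ('a, 'f, 'r) struc \<Rightarrow> bool" where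
  "fin_gen fa ra A \<longleftrightarrow>
     (\<exists>S. finite S \<and> S \<subseteq> s_carrier A \<and>
        (\<forall>B. substruc fa ra B A \<and> S \<subseteq> s_carrier B \<longrightarrow> s_carrier B = s_carrier A))"

text \<open>All structures considered are countable; they are represented on subsets of nat.
A class is a set of such structures, understood up to isomorphism.\<close>

type_synonym ('f, 'r) cstruc = "(nat, 'f, 'r) struc"

definition is_age :: "('f \<Rightarrow> nat) \<Rightarrow> ('r \<Rightarrow> nat) \<Rightarrow> ('f, 'r) cstruc set \<Rightarrow> bool" where
  "is_age fa ra \<C> \<longleftrightarrow>
     (\<forall>A\<in>\<C>. is_struc fa ra A \<and> fin_gen fa ra A) \<and>
     (\<exists>S\<subseteq>\<C>. countable S \<and> (\<forall>A\<in>\<C>. \<exists>B\<in>S. isomorphic fa ra A B)) \<and>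
     (\<forall>A\<in>\<C>. \<forall>B. substruc fa ra B A \<and> fin_gen fa ra B \<longrightarrow> (\<exists>B'\<in>\<C>. isomorphic fa ra B B')) \<and>
     (\<forall>A\<in>\<C>. \<forall>B\<in>\<C>. \<exists>D\<in>\<C>. (\<exists>f. emb fa ra A D f) \<and> (\<exists>g. emb fa ra B D g))"

definition amalgamation :: "('f \<Rightarrow> nat) \<Rightarrow> ('r \<Rightarrow> nat) \<Rightarrow> ('f, 'r) cstruc set \<Rightarrow> bool" where
  "amalgamation fa ra \<C> \<longleftrightarrow>
     (\<forall>A\<in>\<C>. \<forall>B1\<in>\<C>. \<forall>B2\<in>\<C>. \<forall>f1 f2.
        emb fa ra A B1 f1 \<and> emb fa ra A B2 f2 \<longrightarrow>
        (\<exists>D\<in>\<C>. \<exists>g1 g2. emb fa ra B1 D g1 \<and> emb fa ra B2 D g2 \<and>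
            (\<forall>x\<in>s_carrier A. g1 (f1 x) = g2 (f2 x))))"

definition fraisse_class :: "('f \<Rightarrow> nat) \<Rightarrow> ('r \<Rightarrow> nat) \<Rightarrow> ('f, 'r) cstruc set \<Rightarrow> bool" where
  "fraisse_class fa ra \<C> \<longleftrightarrow> is_age fa ra \<C> \<and> amalgamation fa ra \<C>"

definition closure_class :: "('f \<Rightarrow> nat) \<Rightarrow> ('r \<Rightarrow> nat) \<Rightarrow> ('f, 'r) cstruc set \<Rightarrow> ('f, 'r) cstruc set" where
  "closure_class fa ra \<C> =
     {A. is_struc fa ra A \<and>
         (\<forall>B. substruc fa ra B A \<and> fin_gen fa ra B \<longrightarrow> (\<exists>C\<in>\<C>. isomorphic fa ra B C))}"

definition homogeneous :: "('f \<Rightarrow> nat) \<Rightarrow> ('r \<Rightarrow> nat) \<Rightarrow> ('a, 'f, 'r) struc \<Rightarrow> bool" where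
  "homogeneous fa ra U \<longleftrightarrow>
     (\<forall>A1 A2 h. substruc fa ra A1 U \<and> fin_gen fa ra A1 \<and> substruc fa ra A2 U \<and>
        iso fa ra A1 A2 h \<longrightarrow>
        (\<exists>\<alpha>. automorphism fa ra U \<alpha> \<and> (\<forall>x\<in>s_carrier A1. \<alpha> x = h x)))"

definition fraisse_limit :: "('f \<Rightarrow> nat) \<Rightarrow> ('r \<Rightarrow> nat) \<Rightarrow> ('f, 'r) cstruc set \<Rightarrow> ('f, 'r) cstruc \<Rightarrow> bool" where
  "fraisse_limit fa ra \<C> U \<longleftrightarrow>
     is_struc fa ra U \<and> homogeneous fa ra U \<and>
     (\<forall>A. substruc fa ra A U \<and> fin_gen fa ra A \<longrightarrow> (\<exists>B\<in>\<C>. isomorphic fa ra A B)) \<and>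
     (\<forall>B\<in>\<C>. \<exists>A. substruc fa ra A U \<and> isomorphic fa ra B A)"

definition HAP :: "('f \<Rightarrow> nat) \<Rightarrow> ('r \<Rightarrow> nat) \<Rightarrow> ('f, 'r) cstruc set \<Rightarrow> bool" where
  "HAP fa ra \<C> \<longleftrightarrow>
     (\<forall>A\<in>\<C>. \<forall>B1\<in>\<C>. \<forall>B2\<in>\<C>. \<forall>f1 f2.
        emb fa ra A B1 f1 \<and> hom fa ra A B2 f2 \<longrightarrow>
        (\<exists>C\<in>\<C>. \<exists>g1 g2. emb fa ra B2 C g2 \<and> hom fa ra B1 C g1 \<and>
            (\<forall>x\<in>s_carrier A. g1 (f1 x) = g2 (f2 x))))"

definition amalgamated_extension :: "('f \<Rightarrow> nat) \<Rightarrow> ('r \<Rightarrow> nat) \<Rightarrow> ('f, 'r) cstruc set \<Rightarrow> bool" where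
  "amalgamated_extension fa ra \<C> \<longleftrightarrow>
     (\<forall>A\<in>\<C>. \<forall>B1\<in>\<C>. \<forall>B2\<in>\<C>. \<forall>T\<in>\<C>. \<forall>f1 f2 h1 h2.
        emb fa ra A B1 f1 \<and> emb fa ra A B2 f2 \<and> hom fa ra B1 T h1 \<and> hom fa ra B2 T h2 \<and>
        (\<forall>x\<in>s_carrier A. h1 (f1 x) = h2 (f2 x)) \<longrightarrow>
        (\<exists>C\<in>\<C>. \<exists>T'\<in>\<C>. \<exists>g1 g2 k h.
            emb fa ra B1 C g1 \<and> emb fa ra B2 C g2 \<and>
            (\<forall>x\<in>s_carrier A. g1 (f1 x) = g2 (f2 x)) \<and>
            emb fa ra T T' k \<and> hom fa ra C T' h \<and>
            (\<forall>x\<in>s_carrier B1. h (g1 x) = k (h1 x)) \<and>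
            (\<forall>x\<in>s_carrier B2. h (g2 x) = k (h2 x))))"

definition retract :: "('f \<Rightarrow> nat) \<Rightarrow> ('r \<Rightarrow> nat) \<Rightarrow> ('a, 'f, 'r) struc \<Rightarrow> ('a, 'f, 'r) struc \<Rightarrow> bool" where
  "retract fa ra U B \<longleftrightarrow>
     substruc fa ra B U \<and>
     (\<exists>e. hom fa ra U U e \<and> (\<forall>x\<in>s_carrier U. e (e x) = e x) \<and> e ` s_carrier U = s_carrier B)"

definition retraction :: "('f \<Rightarrow> nat) \<Rightarrow> ('r \<Rightarrow> nat) \<Rightarrow> ('a, 'f, 'r) struc \<Rightarrow> ('b, 'f, 'r) struc
    \<Rightarrow> ('a \<Rightarrow> 'b) \<Rightarrow> bool" where
  "retraction fa ra U B r \<longleftrightarrow>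
     hom fa ra U B r \<and> (\<exists>\<iota>. hom fa ra B U \<iota> \<and> (\<forall>x\<in>s_carrier B. r (\<iota> x) = x))"

definition uh_retraction :: "('f \<Rightarrow> nat) \<Rightarrow> ('r \<Rightarrow> nat) \<Rightarrow> ('f, 'r) cstruc set
    \<Rightarrow> ('f, 'r) cstruc \<Rightarrow> ('f, 'r) cstruc \<Rightarrow> (nat \<Rightarrow> nat) \<Rightarrow> bool" where
  "uh_retraction fa ra \<C> U B r \<longleftrightarrow>
     retraction fa ra U B r \<and>
     (\<forall>A\<in>closure_class fa ra \<C>. \<forall>h. hom fa ra A B h \<longrightarrow>
        (\<exists>\<iota>. emb fa ra A U \<iota> \<and> (\<forall>x\<in>s_carrier A. h x = r (\<iota> x)))) \<and>
     (\<forall>A \<iota>. substruc fa ra A U \<and> fin_gen fa ra A \<and> emb fa ra A U \<iota> \<and>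
        (\<forall>x\<in>s_carrier A. r (\<iota> x) = r x) \<longrightarrow>
        (\<exists>\<alpha>. automorphism fa ra U \<alpha> \<and> (\<forall>x\<in>s_carrier U. r (\<alpha> x) = r x) \<and>
             (\<forall>x\<in>s_carrier A. \<alpha> x = \<iota> x)))"

end

theory Submission
  imports Defs
begin

definition restr :: "('r \<Rightarrow> nat) \<Rightarrow> ('a,'f,'r) struc \<Rightarrow> 'a set \<Rightarrow> ('a,'f,'r) struc" where
  "restr ra U S = \<lparr>s_carrier = S, s_fun = s_fun U, s_rel = (\<lambda>r. s_rel U r \<inter> args (ra r) S)\<rparr>"

definition closed :: "('f \<Rightarrow> nat) \<Rightarrow> ('a,'f,'r) struc \<Rightarrow> 'a set \<Rightarrow> bool" where
  "closed fa U S \<longleftrightarrow> S \<subseteq> s_carrier U \<and> (\<forall>f. \<forall>xs\<in>args (fa f) S. s_fun U f xs \<in> S)"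

definition gen :: "('f \<Rightarrow> nat) \<Rightarrow> ('a,'f,'r) struc \<Rightarrow> 'a set \<Rightarrow> 'a set" where
  "gen fa U X = \<Inter>{S. closed fa U S \<and> X \<inter> s_carrier U \<subseteq> S}"

lemma restr_simps[simp]: "s_carrier (restr ra U S) = S" "s_fun (restr ra U S) = s_fun U"
  "s_rel (restr ra U S) r = s_rel U r \<inter> args (ra r) S"
  by (auto simp: restr_def)

lemma args_mono: "S \<subseteq> T \<Longrightarrow> args n S \<subseteq> args n T"
  by (auto simp: args_def)

lemma args_map: "xs \<in> args n S \<Longrightarrow> (\<And>x. x \<in> S \<Longrightarrow> h x \<in> T) \<Longrightarrow> map h xs \<in> args n T"
  by (auto simp: args_def)

lemma args_memD: "xs \<in> args n S \<Longrightarrow> x \<in> set xs \<Longrightarrow> x \<in> S"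
  by (auto simp: args_def)

lemma args_map_cong: "xs \<in> args n S \<Longrightarrow> (\<And>x. x \<in> S \<Longrightarrow> h x = g x) \<Longrightarrow> map h xs = map g xs"
  by (auto simp: args_def intro!: map_cong)

lemma args_inv: "ys \<in> args n (h ` S) \<Longrightarrow> \<exists>xs\<in>args n S. ys = map h xs"
proof -
  assume a: "ys \<in> args n (h ` S)"
  let ?xs = "map (inv_into S h) ys"
  have 1: "?xs \<in> args n S" using a by (auto simp: args_def inv_into_into)
  have 2: "map h ?xs = ys" unfolding map_map
    by (rule map_idI) (use a in \<open>auto simp: args_def f_inv_into_f\<close>)
  show ?thesis
  proof (rule bexI)
    show "ys = map h ?xs" using 2 by simp
    show "?xs \<in> args n S" by (rule 1)
  qed
qed

context fixes fa :: "'f \<Rightarrow> nat" and ra :: "'r \<Rightarrow> nat"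
begin

lemma homD:
  assumes "hom fa ra A B h"
  shows "x \<in> s_carrier A \<Longrightarrow> h x \<in> s_carrier B"
    "xs \<in> args (fa f) (s_carrier A) \<Longrightarrow> h (s_fun A f xs) = s_fun B f (map h xs)"
    "xs \<in> s_rel A r \<Longrightarrow> map h xs \<in> s_rel B r"
  using assms by (auto simp: hom_def)

lemma hom_comp: "hom fa ra A B f \<Longrightarrow> hom fa ra B C g \<Longrightarrow> hom fa ra A C (g \<circ> f)"
proof -
  assume a: "hom fa ra A B f" and b: "hom fa ra B C g"
  have m: "\<And>xs n. xs \<in> args n (s_carrier A) \<Longrightarrow> map f xs \<in> args n (s_carrier B)"
    using args_map homD(1)[OF a] by blast
  show ?thesis unfolding hom_def
  proof (intro conjI ballI allI)
    fix x assume "x \<in> s_carrier A" then show "(g \<circ> f) x \<in> s_carrier C" using homD(1)[OF b homD(1)[OF a]] by simp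
  next
    fix h xs assume xs: "xs \<in> args (fa h) (s_carrier A)"
    have "g (f (s_fun A h xs)) = g (s_fun B h (map f xs))" using homD(2)[OF a xs] by simp
    also have "\<dots> = s_fun C h (map g (map f xs))" using homD(2)[OF b m[OF xs]] by simp
    finally show "(g \<circ> f) (s_fun A h xs) = s_fun C h (map (g \<circ> f) xs)" by simp
  next
    fix r xs assume "xs \<in> s_rel A r"
    then have "map g (map f xs) \<in> s_rel C r" using homD(3)[OF b homD(3)[OF a]] by simp
    then show "map (g \<circ> f) xs \<in> s_rel C r" by simp
  qed
qed

lemma hom_comp': "hom fa ra A B f \<Longrightarrow> hom fa ra B C g \<Longrightarrow> hom fa ra A C (\<lambda>x. g (f x))"
  using hom_comp[of A B f C g] by (simp add: comp_def)

lemma emb_comp: "emb fa ra A B f \<Longrightarrow> emb fa ra B C g \<Longrightarrow> emb fa ra A C (g \<circ> f)"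
  unfolding emb_def
proof (intro conjI)
  assume a: "hom fa ra A B f \<and> inj_on f (s_carrier A) \<and>
    (\<forall>r. \<forall>xs\<in>args (ra r) (s_carrier A). map f xs \<in> s_rel B r \<longrightarrow> xs \<in> s_rel A r)"
    and b: "hom fa ra B C g \<and> inj_on g (s_carrier B) \<and>
    (\<forall>r. \<forall>xs\<in>args (ra r) (s_carrier B). map g xs \<in> s_rel C r \<longrightarrow> xs \<in> s_rel B r)"
  show "hom fa ra A C (g \<circ> f)" using a b hom_comp by blast
  show "inj_on (g \<circ> f) (s_carrier A)"
  proof (rule comp_inj_on)
    show "inj_on f (s_carrier A)" using a by blast
    have "f ` s_carrier A \<subseteq> s_carrier B" using homD(1)[of A B f] a by blast
    then show "inj_on g (f ` s_carrier A)" using b inj_on_subset by blast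
  qed
  show "\<forall>r. \<forall>xs\<in>args (ra r) (s_carrier A). map (g \<circ> f) xs \<in> s_rel C r \<longrightarrow> xs \<in> s_rel A r"
  proof (intro allI ballI impI)
    fix r xs assume xs: "xs \<in> args (ra r) (s_carrier A)" and m: "map (g \<circ> f) xs \<in> s_rel C r"
    have "map f xs \<in> args (ra r) (s_carrier B)" using args_map[OF xs] homD(1)[of A B f] a by blast
    then have "map f xs \<in> s_rel B r" using b m by simp
    then show "xs \<in> s_rel A r" using a xs by blast
  qed
qed

lemma emb_comp': "emb fa ra A B f \<Longrightarrow> emb fa ra B C g \<Longrightarrow> emb fa ra A C (\<lambda>x. g (f x))"
  using emb_comp[of A B f C g] by (simp add: comp_def)

lemma emb_hom: "emb fa ra A B f \<Longrightarrow> hom fa ra A B f" by (simp add: emb_def)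
lemma emb_inj: "emb fa ra A B f \<Longrightarrow> inj_on f (s_carrier A)" by (simp add: emb_def)

lemma hom_cong: "hom fa ra A B f \<Longrightarrow> (\<And>x. x \<in> s_carrier A \<Longrightarrow> f x = g x) \<Longrightarrow> is_struc fa ra A
   \<Longrightarrow> hom fa ra A B g"
proof -
  assume a: "hom fa ra A B f" and e: "\<And>x. x \<in> s_carrier A \<Longrightarrow> f x = g x" and s: "is_struc fa ra A"
  show ?thesis unfolding hom_def
  proof (intro conjI ballI allI)
    fix x assume "x \<in> s_carrier A" then show "g x \<in> s_carrier B" using homD(1)[OF a] e by force
  next
    fix h xs assume xs: "xs \<in> args (fa h) (s_carrier A)"
    have "s_fun A h xs \<in> s_carrier A" using s xs by (simp add: is_struc_def)
    then have "g (s_fun A h xs) = f (s_fun A h xs)" using e by simp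
    also have "\<dots> = s_fun B h (map f xs)" using homD(2)[OF a xs] by simp
    also have "map f xs = map g xs" using xs e args_map_cong by blast
    finally show "g (s_fun A h xs) = s_fun B h (map g xs)" .
  next
    fix r xs assume xs: "xs \<in> s_rel A r"
    then have "xs \<in> args (ra r) (s_carrier A)" using s by (auto simp: is_struc_def)
    then have "map f xs = map g xs" using e args_map_cong by blast
    then show "map g xs \<in> s_rel B r" using homD(3)[OF a xs] by (simp only:)
  qed
qed

lemma emb_cong: "emb fa ra A B f \<Longrightarrow> (\<And>x. x \<in> s_carrier A \<Longrightarrow> f x = g x) \<Longrightarrow> is_struc fa ra A
   \<Longrightarrow> emb fa ra A B g"
proof -
  assume a: "emb fa ra A B f" and e: "\<And>x. x \<in> s_carrier A \<Longrightarrow> f x = g x" and s: "is_struc fa ra A"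
  have "hom fa ra A B g" using hom_cong[OF emb_hom[OF a] e s] by simp
  moreover have "inj_on g (s_carrier A)" using emb_inj[OF a] e inj_on_cong by blast
  moreover have "\<forall>r. \<forall>xs\<in>args (ra r) (s_carrier A). map g xs \<in> s_rel B r \<longrightarrow> xs \<in> s_rel A r"
  proof (intro allI ballI impI)
    fix r xs assume xs: "xs \<in> args (ra r) (s_carrier A)" and m: "map g xs \<in> s_rel B r"
    have "map f xs = map g xs" using xs e args_map_cong by blast
    then have "map f xs \<in> s_rel B r" using m by (simp only:)
    then show "xs \<in> s_rel A r" using a xs unfolding emb_def by blast
  qed
  ultimately show ?thesis unfolding emb_def by blast
qed

lemma iso_cong: "iso fa ra A B f \<Longrightarrow> (\<And>x. x \<in> s_carrier A \<Longrightarrow> f x = g x) \<Longrightarrow> is_struc fa ra A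
   \<Longrightarrow> iso fa ra A B g"
proof -
  assume a: "iso fa ra A B f" and e: "\<And>x. x \<in> s_carrier A \<Longrightarrow> f x = g x" and s: "is_struc fa ra A"
  have "emb fa ra A B g" using a e s emb_cong unfolding iso_def by blast
  moreover have "g ` s_carrier A = s_carrier B" using a e unfolding iso_def by (auto simp: image_def)
  ultimately show ?thesis unfolding iso_def by blast
qed

lemma emb_id: "emb fa ra A A id"
  by (auto simp: emb_def hom_def)

lemma emb_id': "emb fa ra A A (\<lambda>x. x)"
  using emb_id by (simp add: id_def)

lemma iso_comp: "iso fa ra A B f \<Longrightarrow> iso fa ra B C g \<Longrightarrow> iso fa ra A C (g \<circ> f)"
  unfolding iso_def using emb_comp by (metis image_comp)

lemma iso_comp': "iso fa ra A B f \<Longrightarrow> iso fa ra B C g \<Longrightarrow> iso fa ra A C (\<lambda>x. g (f x))"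
  using iso_comp[of A B f C g] by (simp add: comp_def)

lemma iso_inv:
  assumes "iso fa ra A B h" "is_struc fa ra B" "is_struc fa ra A"
  shows "iso fa ra B A (inv_into (s_carrier A) h)"
proof -
  let ?g = "inv_into (s_carrier A) h"
  have e: "emb fa ra A B h" and im: "h ` s_carrier A = s_carrier B" using assms by (auto simp: iso_def)
  have inj: "inj_on h (s_carrier A)" using e by (simp add: emb_def)
  have g1: "\<And>y. y \<in> s_carrier B \<Longrightarrow> ?g y \<in> s_carrier A"
    using im inv_into_into[of _ h "s_carrier A"] by simp
  have g2: "\<And>y. y \<in> s_carrier B \<Longrightarrow> h (?g y) = y"
    using im f_inv_into_f[of _ h "s_carrier A"] by simp
  have g3: "\<And>x. x \<in> s_carrier A \<Longrightarrow> ?g (h x) = x" using inj by simp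
  have mapg: "\<And>ys n. ys \<in> args n (s_carrier B) \<Longrightarrow> map ?g ys \<in> args n (s_carrier A)"
    using g1 args_map by blast
  have mapgh: "\<And>ys n. ys \<in> args n (s_carrier B) \<Longrightarrow> map h (map ?g ys) = ys"
    using g2 by (auto simp: args_def intro!: map_idI)
  have hom: "hom fa ra B A ?g"
    unfolding hom_def
  proof (intro conjI allI ballI)
    fix x assume "x \<in> s_carrier B" then show "?g x \<in> s_carrier A" by (rule g1)
  next
    fix f ys assume ys: "ys \<in> args (fa f) (s_carrier B)"
    have "h (s_fun A f (map ?g ys)) = s_fun B f (map h (map ?g ys))"
      using e mapg[OF ys] by (simp add: emb_def hom_def)
    also have "\<dots> = s_fun B f ys" using mapgh[OF ys] by simp
    finally have "h (s_fun A f (map ?g ys)) = s_fun B f ys" .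
    moreover have "s_fun A f (map ?g ys) \<in> s_carrier A"
      using assms(3) mapg[OF ys] by (simp add: is_struc_def)
    ultimately show "?g (s_fun B f ys) = s_fun A f (map ?g ys)" using g3[of "s_fun A f (map ?g ys)"] by simp
  next
    fix r ys assume ys: "ys \<in> s_rel B r"
    have ys': "ys \<in> args (ra r) (s_carrier B)" using assms(2) ys by (auto simp: is_struc_def)
    have "map h (map ?g ys) \<in> s_rel B r" using mapgh[OF ys'] ys by simp
    then show "map ?g ys \<in> s_rel A r" using e mapg[OF ys'] by (simp add: emb_def)
  qed
  have "inj_on ?g (s_carrier B)" using im by (simp add: inj_on_inv_into)
  moreover have "?g ` s_carrier B = s_carrier A"
  proof
    show "?g ` s_carrier B \<subseteq> s_carrier A" using g1 by blast
    show "s_carrier A \<subseteq> ?g ` s_carrier B"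
    proof
      fix x assume "x \<in> s_carrier A"
      then have "h x \<in> s_carrier B" "?g (h x) = x" using im g3 by auto
      then show "x \<in> ?g ` s_carrier B" by (metis image_eqI)
    qed
  qed
  moreover have "\<forall>r. \<forall>xs\<in>args (ra r) (s_carrier B). map ?g xs \<in> s_rel A r \<longrightarrow> xs \<in> s_rel B r"
  proof (intro allI ballI impI)
    fix r xs assume xs: "xs \<in> args (ra r) (s_carrier B)" and m: "map ?g xs \<in> s_rel A r"
    have "map h (map ?g xs) \<in> s_rel B r" using homD(3)[OF emb_hom[OF e] m] by simp
    then show "xs \<in> s_rel B r" using mapgh[OF xs] by simp
  qed
  ultimately show ?thesis using hom unfolding iso_def emb_def by blast
qed

end

context fixes fa :: "'f \<Rightarrow> nat" and ra :: "'r \<Rightarrow> nat"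
begin

lemma is_struc_closed: "is_struc fa ra U \<Longrightarrow> closed fa U (s_carrier U)"
  by (simp add: is_struc_def closed_def)

lemma restr_is_struc: "closed fa U S \<Longrightarrow> is_struc fa ra (restr ra U S)"
  by (auto simp: is_struc_def closed_def)

lemma restr_substruc: "closed fa U S \<Longrightarrow> substruc fa ra (restr ra U S) U"
  unfolding substruc_def
proof (intro conjI)
  assume c: "closed fa U S"
  show "is_struc fa ra (restr ra U S)" using c by (rule restr_is_struc)
  show "s_carrier (restr ra U S) \<subseteq> s_carrier U" using c by (simp add: closed_def)
  show "emb fa ra (restr ra U S) U id" using c by (auto simp: emb_def hom_def closed_def)
qed

lemma substruc_closed: "substruc fa ra B A \<Longrightarrow> closed fa A (s_carrier B)"
proof -
  assume s: "substruc fa ra B A"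
  then have h: "hom fa ra B A id" and st: "is_struc fa ra B" and sub: "s_carrier B \<subseteq> s_carrier A"
    by (auto simp: substruc_def emb_def)
  show ?thesis unfolding closed_def
  proof (intro conjI allI ballI)
    show "s_carrier B \<subseteq> s_carrier A" by (rule sub)
    fix f xs assume xs: "xs \<in> args (fa f) (s_carrier B)"
    have "s_fun B f xs \<in> s_carrier B" using st xs by (simp add: is_struc_def)
    moreover have "id (s_fun B f xs) = s_fun A f (map id xs)" using homD(2)[OF h xs] .
    ultimately show "s_fun A f xs \<in> s_carrier B" by simp
  qed
qed

lemma substruc_is_struc: "substruc fa ra B A \<Longrightarrow> is_struc fa ra B"
  by (simp add: substruc_def)

lemma substruc_fun: "substruc fa ra B A \<Longrightarrow> xs \<in> args n (s_carrier B) \<Longrightarrow> n = fa f \<Longrightarrow>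
   s_fun B f xs = s_fun A f xs"
proof -
  assume s: "substruc fa ra B A" and xs: "xs \<in> args n (s_carrier B)" and n: "n = fa f"
  have h: "hom fa ra B A id" using s by (simp add: substruc_def emb_def)
  show ?thesis using homD(2)[OF h, of xs f] xs n by simp
qed

lemma substruc_iso_restr: "substruc fa ra A U \<Longrightarrow> iso fa ra A (restr ra U (s_carrier A)) id"
proof -
  assume s: "substruc fa ra A U"
  then have e: "emb fa ra A U id" and st: "is_struc fa ra A" and sub: "s_carrier A \<subseteq> s_carrier U"
    by (auto simp: substruc_def)
  have h: "hom fa ra A (restr ra U (s_carrier A)) id" unfolding hom_def
  proof (intro conjI allI ballI)
    fix x assume "x \<in> s_carrier A" then show "id x \<in> s_carrier (restr ra U (s_carrier A))" by simp
  next
    fix f xs assume xs: "xs \<in> args (fa f) (s_carrier A)"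
    show "id (s_fun A f xs) = s_fun (restr ra U (s_carrier A)) f (map id xs)"
      using homD(2)[OF emb_hom[OF e] xs] by simp
  next
    fix r xs assume xs: "xs \<in> s_rel A r"
    have "map id xs \<in> s_rel U r" using homD(3)[OF emb_hom[OF e] xs] .
    moreover have "xs \<in> args (ra r) (s_carrier A)" using st xs by (auto simp: is_struc_def)
    ultimately show "map id xs \<in> s_rel (restr ra U (s_carrier A)) r" by simp
  qed
  moreover have "\<forall>r. \<forall>xs\<in>args (ra r) (s_carrier A). map id xs \<in> s_rel (restr ra U (s_carrier A)) r \<longrightarrow> xs \<in> s_rel A r"
    using e by (auto simp: emb_def)
  ultimately show ?thesis by (auto simp: iso_def emb_def)
qed

lemma substruc_iso_restr': "substruc fa ra A U \<Longrightarrow> iso fa ra (restr ra U (s_carrier A)) A id"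
proof -
  assume s: "substruc fa ra A U"
  have i: "iso fa ra A (restr ra U (s_carrier A)) id" using s by (rule substruc_iso_restr)
  have st: "is_struc fa ra (restr ra U (s_carrier A))" using substruc_closed[OF s] by (rule restr_is_struc)
  have "iso fa ra (restr ra U (s_carrier A)) A (inv_into (s_carrier A) id)"
    using iso_inv[OF i _ substruc_is_struc[OF s]] st by simp
  then show ?thesis by (rule iso_cong[OF _ _ st]) (use inv_into_f_f[OF inj_on_id] in simp)
qed

lemma hom_into_restr: "is_struc fa ra X \<Longrightarrow> S \<subseteq> s_carrier U \<Longrightarrow>
   hom fa ra X (restr ra U S) h \<longleftrightarrow> hom fa ra X U h \<and> h ` s_carrier X \<subseteq> S"
  unfolding hom_def is_struc_def
  apply (auto simp: args_def)
  apply blast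
  done

lemma emb_into_restr: "is_struc fa ra X \<Longrightarrow> S \<subseteq> s_carrier U \<Longrightarrow>
   emb fa ra X (restr ra U S) h \<longleftrightarrow> emb fa ra X U h \<and> h ` s_carrier X \<subseteq> S"
proof -
  assume a: "is_struc fa ra X" "S \<subseteq> s_carrier U"
  have r: "\<And>r xs. xs \<in> args (ra r) (s_carrier X) \<Longrightarrow> h ` s_carrier X \<subseteq> S \<Longrightarrow> map h xs \<in> args (ra r) S"
    by (auto simp: args_def)
  show ?thesis
    unfolding emb_def hom_into_restr[OF a] using r by auto
qed

lemma hom_from_restr: "S \<subseteq> s_carrier U \<Longrightarrow> hom fa ra U Y h \<Longrightarrow> hom fa ra (restr ra U S) Y h"
proof -
  assume S: "S \<subseteq> s_carrier U" and h: "hom fa ra U Y h"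
  show ?thesis unfolding hom_def
  proof (intro conjI ballI allI)
    fix x assume "x \<in> s_carrier (restr ra U S)" then show "h x \<in> s_carrier Y" using S homD(1)[OF h] by auto
  next
    fix f xs assume "xs \<in> args (fa f) (s_carrier (restr ra U S))"
    then have "xs \<in> args (fa f) (s_carrier U)" using args_mono[OF S] by auto
    then show "h (s_fun (restr ra U S) f xs) = s_fun Y f (map h xs)" using homD(2)[OF h] by simp
  next
    fix r xs assume "xs \<in> s_rel (restr ra U S) r"
    then show "map h xs \<in> s_rel Y r" using homD(3)[OF h] by simp
  qed
qed

lemma emb_from_restr: "S \<subseteq> s_carrier U \<Longrightarrow> emb fa ra U Y h \<Longrightarrow> emb fa ra (restr ra U S) Y h"
proof -
  assume a: "S \<subseteq> s_carrier U" "emb fa ra U Y h"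
  have "hom fa ra (restr ra U S) Y h" using hom_from_restr[OF a(1) emb_hom[OF a(2)]] .
  moreover have "inj_on h S" using inj_on_subset[OF emb_inj[OF a(2)] a(1)] .
  moreover have "\<forall>r. \<forall>xs\<in>args (ra r) S. map h xs \<in> s_rel Y r \<longrightarrow> xs \<in> s_rel U r"
  proof (intro allI ballI impI)
    fix r xs assume "xs \<in> args (ra r) S" "map h xs \<in> s_rel Y r"
    moreover have "args (ra r) S \<subseteq> args (ra r) (s_carrier U)" using args_mono[OF a(1)] .
    ultimately show "xs \<in> s_rel U r" using a(2) unfolding emb_def by blast
  qed
  ultimately show ?thesis unfolding emb_def by simp
qed

lemma restr_restr: "P \<subseteq> Q \<Longrightarrow> restr ra (restr ra U Q) P = restr ra U P"
proof -
  assume "P \<subseteq> Q"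
  then have "\<And>r. args (ra r) P \<subseteq> args (ra r) Q" by (rule args_mono)
  then show ?thesis by (auto simp: restr_def)
qed

lemma restr_self: "is_struc fa ra U \<Longrightarrow> restr ra U (s_carrier U) = U"
proof -
  assume "is_struc fa ra U"
  then have "\<And>r. s_rel U r \<inter> args (ra r) (s_carrier U) = s_rel U r" by (auto simp: is_struc_def)
  then show ?thesis by (simp add: restr_def)
qed

lemma gen_closed: "is_struc fa ra U \<Longrightarrow> closed fa U (gen fa U X)"
proof -
  assume st: "is_struc fa ra U"
  have c: "closed fa U (s_carrier U)" using st by (rule is_struc_closed)
  show ?thesis unfolding closed_def
  proof (intro conjI allI ballI)
    show "gen fa U X \<subseteq> s_carrier U" using c by (auto simp: gen_def)
    fix f xs assume xs: "xs \<in> args (fa f) (gen fa U X)"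
    show "s_fun U f xs \<in> gen fa U X" unfolding gen_def
    proof
      fix S assume S: "S \<in> {S. closed fa U S \<and> X \<inter> s_carrier U \<subseteq> S}"
      have "gen fa U X \<subseteq> S" using S by (auto simp: gen_def)
      then have "xs \<in> args (fa f) S" using xs args_mono by blast
      then show "s_fun U f xs \<in> S" using S by (simp add: closed_def)
    qed
  qed
qed

lemma gen_least: "closed fa U S \<Longrightarrow> X \<inter> s_carrier U \<subseteq> S \<Longrightarrow> gen fa U X \<subseteq> S"
  by (auto simp: gen_def)

lemma gen_sub: "is_struc fa ra U \<Longrightarrow> X \<subseteq> s_carrier U \<Longrightarrow> X \<subseteq> gen fa U X"
  by (auto simp: gen_def)

lemma gen_carrier: "is_struc fa ra U \<Longrightarrow> gen fa U X \<subseteq> s_carrier U"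
proof -
  assume "is_struc fa ra U" then have "closed fa U (gen fa U X)" by (rule gen_closed)
  then show ?thesis by (simp add: closed_def)
qed

lemma gen_mono: "X \<subseteq> Y \<Longrightarrow> gen fa U X \<subseteq> gen fa U Y"
  unfolding gen_def by (rule Inter_anti_mono) blast

lemma gen_restr: "is_struc fa ra U \<Longrightarrow> closed fa U V \<Longrightarrow> G \<subseteq> V \<Longrightarrow> gen fa (restr ra U V) G = gen fa U G"
proof
  assume st: "is_struc fa ra U" and c: "closed fa U V" and G: "G \<subseteq> V"
  have sr: "is_struc fa ra (restr ra U V)" using c by (rule restr_is_struc)
  have "gen fa U G \<subseteq> V" using gen_least[OF c] G by blast
  then have "closed fa (restr ra U V) (gen fa U G)" using gen_closed[OF st] by (simp add: closed_def)
  moreover have "G \<inter> V \<subseteq> gen fa U G" using G gen_sub[OF st, of G] c by (auto simp: closed_def)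
  ultimately show "gen fa (restr ra U V) G \<subseteq> gen fa U G" using gen_least[of "restr ra U V"] by simp
  have "closed fa U (gen fa (restr ra U V) G)" using gen_closed[OF sr, of G] c by (auto simp: closed_def)
  moreover have "G \<inter> s_carrier U \<subseteq> gen fa (restr ra U V) G" using gen_sub[OF sr, of G] G by auto
  ultimately show "gen fa U G \<subseteq> gen fa (restr ra U V) G" by (rule gen_least)
qed

lemma hom_gen_image: "hom fa ra X Y h \<Longrightarrow> is_struc fa ra X \<Longrightarrow> is_struc fa ra Y \<Longrightarrow>
  h ` gen fa X G \<subseteq> gen fa Y (h ` (G \<inter> s_carrier X))"
proof -
  assume h: "hom fa ra X Y h" and sx: "is_struc fa ra X" and sy: "is_struc fa ra Y"
  let ?P = "{x\<in>s_carrier X. h x \<in> gen fa Y (h ` (G \<inter> s_carrier X))}"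
  have "closed fa X ?P" unfolding closed_def
  proof (intro conjI allI ballI)
    show "?P \<subseteq> s_carrier X" by blast
    fix f xs assume xs: "xs \<in> args (fa f) ?P"
    have xs': "xs \<in> args (fa f) (s_carrier X)" using xs args_mono[of ?P] by blast
    have "s_fun X f xs \<in> s_carrier X" using sx xs' by (simp add: is_struc_def)
    moreover have "h (s_fun X f xs) = s_fun Y f (map h xs)" using homD(2)[OF h xs'] .
    moreover have "map h xs \<in> args (fa f) (gen fa Y (h ` (G \<inter> s_carrier X)))"
      using xs args_map[of xs "fa f" ?P h] by blast
    ultimately show "s_fun X f xs \<in> ?P" using gen_closed[OF sy] by (simp add: closed_def)
  qed
  moreover have "G \<inter> s_carrier X \<subseteq> ?P"
  proof
    fix x assume x: "x \<in> G \<inter> s_carrier X"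
    then have "h x \<in> s_carrier Y" using homD(1)[OF h] by blast
    then show "x \<in> ?P" using x gen_sub[OF sy, of "h ` (G \<inter> s_carrier X)"] homD(1)[OF h] by blast
  qed
  ultimately have "gen fa X G \<subseteq> ?P" by (rule gen_least)
  then show ?thesis by blast
qed

lemma hom_eq_gen: "hom fa ra X Y h \<Longrightarrow> hom fa ra X Y g \<Longrightarrow> is_struc fa ra X \<Longrightarrow>
  (\<And>x. x \<in> G \<Longrightarrow> x \<in> s_carrier X \<Longrightarrow> h x = g x) \<Longrightarrow> x \<in> gen fa X G \<Longrightarrow> h x = g x"
proof -
  assume h: "hom fa ra X Y h" and g: "hom fa ra X Y g" and sx: "is_struc fa ra X"
    and e: "\<And>x. x \<in> G \<Longrightarrow> x \<in> s_carrier X \<Longrightarrow> h x = g x" and x: "x \<in> gen fa X G"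
  let ?P = "{x\<in>s_carrier X. h x = g x}"
  have "closed fa X ?P" unfolding closed_def
  proof (intro conjI allI ballI)
    show "?P \<subseteq> s_carrier X" by blast
    fix f xs assume xs: "xs \<in> args (fa f) ?P"
    have xs': "xs \<in> args (fa f) (s_carrier X)" using xs args_mono[of ?P] by blast
    have "s_fun X f xs \<in> s_carrier X" using sx xs' by (simp add: is_struc_def)
    moreover have "h (s_fun X f xs) = s_fun Y f (map h xs)" using homD(2)[OF h xs'] .
    moreover have "g (s_fun X f xs) = s_fun Y f (map g xs)" using homD(2)[OF g xs'] .
    moreover have "map h xs = map g xs" using xs args_map_cong[of xs "fa f" ?P h g] by blast
    ultimately show "s_fun X f xs \<in> ?P" by simp
  qed
  moreover have "G \<inter> s_carrier X \<subseteq> ?P" using e by blast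
  ultimately have "gen fa X G \<subseteq> ?P" by (rule gen_least)
  then show ?thesis using x by blast
qed

lemma fin_gen_gen: "is_struc fa ra U \<Longrightarrow> finite F \<Longrightarrow> F \<subseteq> s_carrier U \<Longrightarrow>
  fin_gen fa ra (restr ra U (gen fa U F))"
  unfolding fin_gen_def
proof (intro exI conjI allI impI)
  assume st: "is_struc fa ra U" and F: "finite F" "F \<subseteq> s_carrier U"
  show "finite F" by fact
  show "F \<subseteq> s_carrier (restr ra U (gen fa U F))" using gen_sub[OF st F(2)] by simp
  fix B assume B: "substruc fa ra B (restr ra U (gen fa U F)) \<and> F \<subseteq> s_carrier B"
  have cB: "closed fa (restr ra U (gen fa U F)) (s_carrier B)" using B substruc_closed by blast
  have "closed fa U (s_carrier B)" using cB gen_carrier[OF st, of F] by (auto simp: closed_def)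
  then have "gen fa U F \<subseteq> s_carrier B" using B gen_least by blast
  moreover have "s_carrier B \<subseteq> gen fa U F" using cB by (simp add: closed_def)
  ultimately show "s_carrier B = s_carrier (restr ra U (gen fa U F))" by simp
qed

lemma fin_gen_substruc: "is_struc fa ra U \<Longrightarrow> substruc fa ra A U \<Longrightarrow> fin_gen fa ra A \<Longrightarrow>
  \<exists>F. finite F \<and> F \<subseteq> s_carrier A \<and> s_carrier A = gen fa U F"
proof -
  assume st: "is_struc fa ra U" and s: "substruc fa ra A U" and fg: "fin_gen fa ra A"
  obtain F where F: "finite F" "F \<subseteq> s_carrier A"
    and m: "\<And>B. substruc fa ra B A \<and> F \<subseteq> s_carrier B \<Longrightarrow> s_carrier B = s_carrier A"
    using fg unfolding fin_gen_def by blast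
  have cA: "closed fa U (s_carrier A)" using s by (rule substruc_closed)
  have g1: "gen fa U F \<subseteq> s_carrier A" using gen_least[OF cA] F by blast
  have "closed fa A (gen fa U F)" unfolding closed_def
  proof (intro conjI allI ballI)
    show "gen fa U F \<subseteq> s_carrier A" by (rule g1)
    fix f xs assume xs: "xs \<in> args (fa f) (gen fa U F)"
    have "xs \<in> args (fa f) (s_carrier A)" using xs args_mono[OF g1] by blast
    then have "s_fun A f xs = s_fun U f xs" using substruc_fun[OF s] by blast
    then show "s_fun A f xs \<in> gen fa U F" using gen_closed[OF st] xs by (simp add: closed_def)
  qed
  then have "substruc fa ra (restr ra A (gen fa U F)) A" by (rule restr_substruc)
  moreover have "F \<subseteq> gen fa U F" using gen_sub[OF st] F cA by (auto simp: closed_def)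
  ultimately have "gen fa U F = s_carrier A" using m[of "restr ra A (gen fa U F)"] by simp
  then show ?thesis using F by blast
qed

lemma substruc_refl: "is_struc fa ra A \<Longrightarrow> substruc fa ra A A"
  by (simp add: substruc_def emb_id)

lemma fin_gen_iff: "is_struc fa ra X \<Longrightarrow>
  fin_gen fa ra X \<longleftrightarrow> (\<exists>F. finite F \<and> F \<subseteq> s_carrier X \<and> gen fa X F = s_carrier X)"
proof
  assume st: "is_struc fa ra X"
  show "fin_gen fa ra X \<Longrightarrow> \<exists>F. finite F \<and> F \<subseteq> s_carrier X \<and> gen fa X F = s_carrier X"
    using fin_gen_substruc[OF st substruc_refl[OF st]] by metis
  assume "\<exists>F. finite F \<and> F \<subseteq> s_carrier X \<and> gen fa X F = s_carrier X"
  then obtain F where F: "finite F" "F \<subseteq> s_carrier X" "gen fa X F = s_carrier X" by blast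
  have "fin_gen fa ra (restr ra X (gen fa X F))" using fin_gen_gen[OF st F(1,2)] .
  then show "fin_gen fa ra X" using F(3) restr_self[OF st] by simp
qed

lemma iso_fin_gen: "iso fa ra X Y h \<Longrightarrow> is_struc fa ra X \<Longrightarrow> is_struc fa ra Y \<Longrightarrow> fin_gen fa ra X \<Longrightarrow>
  fin_gen fa ra Y"
proof -
  assume i: "iso fa ra X Y h" and sx: "is_struc fa ra X" and sy: "is_struc fa ra Y" and fg: "fin_gen fa ra X"
  obtain F where F: "finite F" "F \<subseteq> s_carrier X" "gen fa X F = s_carrier X"
    using fg fin_gen_iff[OF sx] by blast
  have h: "hom fa ra X Y h" and im: "h ` s_carrier X = s_carrier Y" using i by (auto simp: iso_def emb_def)
  have "h ` gen fa X F \<subseteq> gen fa Y (h ` (F \<inter> s_carrier X))" using hom_gen_image[OF h sx sy] .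
  then have "s_carrier Y \<subseteq> gen fa Y (h ` F)" using F im by (simp add: Int_absorb2)
  moreover have "gen fa Y (h ` F) \<subseteq> s_carrier Y" using gen_carrier[OF sy] .
  moreover have "h ` F \<subseteq> s_carrier Y" using F im by blast
  ultimately show ?thesis using fin_gen_iff[OF sy] F(1) by blast
qed

lemma hom_image_closed: "hom fa ra X U h \<Longrightarrow> is_struc fa ra X \<Longrightarrow> closed fa U (h ` s_carrier X)"
  unfolding closed_def
proof (intro conjI allI ballI)
  assume h: "hom fa ra X U h" and sx: "is_struc fa ra X"
  show "h ` s_carrier X \<subseteq> s_carrier U" using homD(1)[OF h] by blast
  fix f ys assume "ys \<in> args (fa f) (h ` s_carrier X)"
  then obtain xs where xs: "xs \<in> args (fa f) (s_carrier X)" "ys = map h xs" using args_inv by blast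
  have "s_fun X f xs \<in> s_carrier X" using sx xs by (simp add: is_struc_def)
  then show "s_fun U f ys \<in> h ` s_carrier X" using homD(2)[OF h xs(1)] xs(2) by (metis image_eqI)
qed

lemma emb_image_iso: "emb fa ra X U h \<Longrightarrow> is_struc fa ra X \<Longrightarrow> iso fa ra X (restr ra U (h ` s_carrier X)) h"
proof -
  assume e: "emb fa ra X U h" and sx: "is_struc fa ra X"
  have "h ` s_carrier X \<subseteq> s_carrier U" using homD(1)[OF emb_hom[OF e]] by blast
  then have "emb fa ra X (restr ra U (h ` s_carrier X)) h" using emb_into_restr[OF sx] e by blast
  then show ?thesis by (simp add: iso_def)
qed

end

definition inC :: "('f \<Rightarrow> nat) \<Rightarrow> ('r \<Rightarrow> nat) \<Rightarrow> ('f, 'r) cstruc set \<Rightarrow> ('f, 'r) cstruc \<Rightarrow> bool" where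
  "inC fa ra C X \<longleftrightarrow> is_struc fa ra X \<and> (\<exists>Y\<in>C. isomorphic fa ra X Y)"

context fixes fa :: "'f \<Rightarrow> nat" and ra :: "'r \<Rightarrow> nat"
begin

lemma iso_emb: "iso fa ra A B h \<Longrightarrow> emb fa ra A B h" by (simp add: iso_def)

lemma iso_id_refl: "iso fa ra A A id" by (simp add: iso_def emb_id)

lemma inC_iso: "inC fa ra C X \<Longrightarrow> iso fa ra X' X h \<Longrightarrow> is_struc fa ra X' \<Longrightarrow> inC fa ra C X'"
  unfolding inC_def isomorphic_def using iso_comp by blast

lemma inC_iso': "inC fa ra C X \<Longrightarrow> iso fa ra X X' h \<Longrightarrow> is_struc fa ra X' \<Longrightarrow> inC fa ra C X'"
  using inC_iso iso_inv unfolding inC_def by blast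

end

locale fr =
  fixes fa :: "'f \<Rightarrow> nat" and ra :: "'r \<Rightarrow> nat" and C :: "('f, 'r) cstruc set" and U :: "('f, 'r) cstruc"
  assumes fc: "fraisse_class fa ra C" and fl: "fraisse_limit fa ra C U"
begin

abbreviation "IC \<equiv> inC fa ra C"

lemma U_struc: "is_struc fa ra U" using fl by (simp add: fraisse_limit_def)

lemma U_hom: "homogeneous fa ra U" using fl by (simp add: fraisse_limit_def)

lemma C_struc: "Y \<in> C \<Longrightarrow> is_struc fa ra Y" using fc by (simp add: fraisse_class_def is_age_def)

lemma C_fg: "Y \<in> C \<Longrightarrow> fin_gen fa ra Y" using fc by (simp add: fraisse_class_def is_age_def)

lemma C_IC: "Y \<in> C \<Longrightarrow> IC Y"
  unfolding inC_def isomorphic_def using C_struc iso_id_refl by blast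

lemma IC_struc: "IC X \<Longrightarrow> is_struc fa ra X" by (simp add: inC_def)

lemma IC_fg: "IC X \<Longrightarrow> fin_gen fa ra X"
proof -
  assume "IC X"
  then obtain Y h where Y: "Y \<in> C" "iso fa ra X Y h" and sx: "is_struc fa ra X"
    unfolding inC_def isomorphic_def by blast
  have "iso fa ra Y X (inv_into (s_carrier X) h)" using iso_inv[OF Y(2) C_struc[OF Y(1)] sx] .
  then show ?thesis using iso_fin_gen C_struc[OF Y(1)] sx C_fg[OF Y(1)] by blast
qed

lemma substruc_IC: "substruc fa ra A U \<Longrightarrow> fin_gen fa ra A \<Longrightarrow> IC A"
  using fl unfolding fraisse_limit_def inC_def substruc_def by blast

lemma restr_IC: "closed fa U S \<Longrightarrow> fin_gen fa ra (restr ra U S) \<Longrightarrow> IC (restr ra U S)"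
  using substruc_IC restr_substruc by blast

lemma gen_IC: "finite F \<Longrightarrow> F \<subseteq> s_carrier U \<Longrightarrow> IC (restr ra U (gen fa U F))"
  using restr_IC gen_closed[OF U_struc] fin_gen_gen[OF U_struc] by blast

lemma IC_emb: "IC X \<Longrightarrow> \<exists>\<theta>. emb fa ra X U \<theta>"
proof -
  assume "IC X"
  then obtain Y h where Y: "Y \<in> C" "iso fa ra X Y h"
    unfolding inC_def isomorphic_def by blast
  obtain A g where A: "substruc fa ra A U" "iso fa ra Y A g"
    using fl Y(1) unfolding fraisse_limit_def isomorphic_def by blast
  have "emb fa ra A U id" using A(1) by (simp add: substruc_def)
  then have "emb fa ra X U (id \<circ> (g \<circ> h))" using emb_comp iso_emb Y(2) A(2) by blast
  then show ?thesis by blast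
qed

lemma automorphism_emb: "automorphism fa ra U \<alpha> \<Longrightarrow> emb fa ra U U \<alpha>"
  by (simp add: automorphism_def iso_def)

lemma EP:
  assumes X: "IC X" and Y: "IC Y" and phi: "emb fa ra X Y \<phi>" and psi: "emb fa ra X U \<psi>"
  shows "\<exists>\<chi>. emb fa ra Y U \<chi> \<and> (\<forall>x\<in>s_carrier X. \<chi> (\<phi> x) = \<psi> x)"
proof -
  obtain \<theta> where th: "emb fa ra Y U \<theta>" using IC_emb[OF Y] by blast
  have sx: "is_struc fa ra X" using X by (rule IC_struc)
  define tp where "tp = \<theta> \<circ> \<phi>"
  have tpe: "emb fa ra X U tp" unfolding tp_def using emb_comp[OF phi th] .
  define A1 where "A1 = restr ra U (tp ` s_carrier X)"
  define A2 where "A2 = restr ra U (\<psi> ` s_carrier X)"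
  have c1: "closed fa U (tp ` s_carrier X)" using hom_image_closed[OF emb_hom[OF tpe] sx] .
  have c2: "closed fa U (\<psi> ` s_carrier X)" using hom_image_closed[OF emb_hom[OF psi] sx] .
  have s1: "substruc fa ra A1 U" unfolding A1_def using restr_substruc[OF c1] .
  have s2: "substruc fa ra A2 U" unfolding A2_def using restr_substruc[OF c2] .
  have st1: "is_struc fa ra A1" unfolding A1_def using restr_is_struc[OF c1] .
  have st2: "is_struc fa ra A2" unfolding A2_def using restr_is_struc[OF c2] .
  have i1: "iso fa ra X A1 tp" unfolding A1_def using emb_image_iso[OF tpe sx] .
  have i2: "iso fa ra X A2 \<psi>" unfolding A2_def using emb_image_iso[OF psi sx] .
  have fg1: "fin_gen fa ra A1" using iso_fin_gen[OF i1 sx st1 IC_fg[OF X]] .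
  have i1': "iso fa ra A1 X (inv_into (s_carrier X) tp)" using iso_inv[OF i1 st1 sx] .
  have i12: "iso fa ra A1 A2 (\<psi> \<circ> inv_into (s_carrier X) tp)" using iso_comp[OF i1' i2] .
  obtain \<alpha> where al: "automorphism fa ra U \<alpha>"
    and ext: "\<forall>x\<in>s_carrier A1. \<alpha> x = (\<psi> \<circ> inv_into (s_carrier X) tp) x"
    using U_hom s1 fg1 s2 i12 unfolding homogeneous_def by blast
  have "emb fa ra Y U (\<alpha> \<circ> \<theta>)" using emb_comp[OF th automorphism_emb[OF al]] .
  moreover have "\<forall>x\<in>s_carrier X. (\<alpha> \<circ> \<theta>) (\<phi> x) = \<psi> x"
  proof
    fix x assume x: "x \<in> s_carrier X"
    have "tp x \<in> s_carrier A1" unfolding A1_def using x by simp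
    then have "\<alpha> (tp x) = \<psi> (inv_into (s_carrier X) tp (tp x))" using ext by simp
    also have "\<dots> = \<psi> x" using inv_into_f_f[OF emb_inj[OF tpe] x] by simp
    finally show "(\<alpha> \<circ> \<theta>) (\<phi> x) = \<psi> x" unfolding tp_def by simp
  qed
  ultimately show ?thesis by blast
qed

end

context fr
begin

lemma IC_obtain:
  assumes "IC X"
  obtains Y \<phi> where "Y \<in> C" "iso fa ra X Y \<phi>" "iso fa ra Y X (inv_into (s_carrier X) \<phi>)"
    "\<And>x. x \<in> s_carrier X \<Longrightarrow> inv_into (s_carrier X) \<phi> (\<phi> x) = x"
    "\<And>y. y \<in> s_carrier Y \<Longrightarrow> inv_into (s_carrier X) \<phi> y \<in> s_carrier X"
    "\<And>y. y \<in> s_carrier Y \<Longrightarrow> \<phi> (inv_into (s_carrier X) \<phi> y) = y"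
    "\<And>x. x \<in> s_carrier X \<Longrightarrow> \<phi> x \<in> s_carrier Y"
proof -
  obtain Y \<phi> where Y: "Y \<in> C" "iso fa ra X Y \<phi>" using assms unfolding inC_def isomorphic_def by blast
  have i: "iso fa ra Y X (inv_into (s_carrier X) \<phi>)" using iso_inv[OF Y(2) C_struc[OF Y(1)] IC_struc[OF assms]] .
  have inj: "inj_on \<phi> (s_carrier X)" and im: "\<phi> ` s_carrier X = s_carrier Y" using Y(2) by (auto simp: iso_def emb_def)
  show ?thesis
  proof (rule that[OF Y i])
    show "\<And>x. x \<in> s_carrier X \<Longrightarrow> inv_into (s_carrier X) \<phi> (\<phi> x) = x" using inv_into_f_f[OF inj] .
    show "\<And>y. y \<in> s_carrier Y \<Longrightarrow> inv_into (s_carrier X) \<phi> y \<in> s_carrier X"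
      using im inv_into_into[of _ \<phi> "s_carrier X"] by blast
    show "\<And>y. y \<in> s_carrier Y \<Longrightarrow> \<phi> (inv_into (s_carrier X) \<phi> y) = y"
      using im f_inv_into_f[of _ \<phi> "s_carrier X"] by blast
    show "\<And>x. x \<in> s_carrier X \<Longrightarrow> \<phi> x \<in> s_carrier Y" using im by blast
  qed
qed

lemma HAP':
  assumes H: "HAP fa ra C" and A: "IC A" and B1: "IC B1" and B2: "IC B2"
    and f1: "emb fa ra A B1 f1" and f2: "hom fa ra A B2 f2"
  shows "\<exists>D g1 g2. IC D \<and> emb fa ra B2 D g2 \<and> hom fa ra B1 D g1 \<and> (\<forall>x\<in>s_carrier A. g1 (f1 x) = g2 (f2 x))"
proof -
  obtain A' pA where A': "A' \<in> C" "iso fa ra A A' pA" "iso fa ra A' A (inv_into (s_carrier A) pA)"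
    "\<And>x. x \<in> s_carrier A \<Longrightarrow> inv_into (s_carrier A) pA (pA x) = x"
    "\<And>x. x \<in> s_carrier A \<Longrightarrow> pA x \<in> s_carrier A'"
    using IC_obtain[OF A] by metis
  obtain B1' p1 where B1': "B1' \<in> C" "iso fa ra B1 B1' p1" by (rule IC_obtain[OF B1])
  obtain B2' p2 where B2': "B2' \<in> C" "iso fa ra B2 B2' p2" by (rule IC_obtain[OF B2])
  let ?qA = "inv_into (s_carrier A) pA"
  have f1': "emb fa ra A' B1' (\<lambda>x. p1 (f1 (?qA x)))"
    using emb_comp'[OF emb_comp'[OF iso_emb[OF A'(3)] f1] iso_emb[OF B1'(2)]] .
  have f2': "hom fa ra A' B2' (\<lambda>x. p2 (f2 (?qA x)))"
    using hom_comp'[OF hom_comp'[OF emb_hom[OF iso_emb[OF A'(3)]] f2] emb_hom[OF iso_emb[OF B2'(2)]]] .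
  obtain D g1 g2 where D: "D \<in> C" "emb fa ra B2' D g2" "hom fa ra B1' D g1"
    "\<forall>x\<in>s_carrier A'. g1 (p1 (f1 (?qA x))) = g2 (p2 (f2 (?qA x)))"
    using H A'(1) B1'(1) B2'(1) f1' f2' unfolding HAP_def by blast
  have "emb fa ra B2 D (\<lambda>x. g2 (p2 x))" using emb_comp'[OF iso_emb[OF B2'(2)] D(2)] .
  moreover have "hom fa ra B1 D (\<lambda>x. g1 (p1 x))" using hom_comp'[OF emb_hom[OF iso_emb[OF B1'(2)]] D(3)] .
  moreover have "\<forall>x\<in>s_carrier A. g1 (p1 (f1 x)) = g2 (p2 (f2 x))"
  proof
    fix x assume x: "x \<in> s_carrier A"
    then show "g1 (p1 (f1 x)) = g2 (p2 (f2 x))" using D(4) A'(4,5)[OF x] by metis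
  qed
  ultimately show ?thesis using C_IC[OF D(1)] by blast
qed

lemma AEP':
  assumes H: "amalgamated_extension fa ra C" and A: "IC A" and B1: "IC B1" and B2: "IC B2" and T: "IC T"
    and f1: "emb fa ra A B1 f1" and f2: "emb fa ra A B2 f2"
    and h1: "hom fa ra B1 T h1" and h2: "hom fa ra B2 T h2"
    and eq: "\<forall>x\<in>s_carrier A. h1 (f1 x) = h2 (f2 x)"
  shows "\<exists>D T' g1 g2 k h. IC D \<and> IC T' \<and> emb fa ra B1 D g1 \<and> emb fa ra B2 D g2 \<and>
            (\<forall>x\<in>s_carrier A. g1 (f1 x) = g2 (f2 x)) \<and>
            emb fa ra T T' k \<and> hom fa ra D T' h \<and>
            (\<forall>x\<in>s_carrier B1. h (g1 x) = k (h1 x)) \<and>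
            (\<forall>x\<in>s_carrier B2. h (g2 x) = k (h2 x))"
proof -
  obtain A' pA where A': "A' \<in> C" "iso fa ra A A' pA" "iso fa ra A' A (inv_into (s_carrier A) pA)"
    "\<And>x. x \<in> s_carrier A \<Longrightarrow> inv_into (s_carrier A) pA (pA x) = x"
    "\<And>y. y \<in> s_carrier A' \<Longrightarrow> inv_into (s_carrier A) pA y \<in> s_carrier A"
    "\<And>x. x \<in> s_carrier A \<Longrightarrow> pA x \<in> s_carrier A'"
    using IC_obtain[OF A] by metis
  obtain B1' p1 where B1': "B1' \<in> C" "iso fa ra B1 B1' p1" "iso fa ra B1' B1 (inv_into (s_carrier B1) p1)"
    "\<And>x. x \<in> s_carrier B1 \<Longrightarrow> inv_into (s_carrier B1) p1 (p1 x) = x"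
    "\<And>y. y \<in> s_carrier B1' \<Longrightarrow> inv_into (s_carrier B1) p1 y \<in> s_carrier B1"
    "\<And>x. x \<in> s_carrier B1 \<Longrightarrow> p1 x \<in> s_carrier B1'"
    using IC_obtain[OF B1] by metis
  obtain B2' p2 where B2': "B2' \<in> C" "iso fa ra B2 B2' p2" "iso fa ra B2' B2 (inv_into (s_carrier B2) p2)"
    "\<And>x. x \<in> s_carrier B2 \<Longrightarrow> inv_into (s_carrier B2) p2 (p2 x) = x"
    "\<And>y. y \<in> s_carrier B2' \<Longrightarrow> inv_into (s_carrier B2) p2 y \<in> s_carrier B2"
    "\<And>x. x \<in> s_carrier B2 \<Longrightarrow> p2 x \<in> s_carrier B2'"
    using IC_obtain[OF B2] by metis
  obtain T0 pT where T0: "T0 \<in> C" "iso fa ra T T0 pT" by (rule IC_obtain[OF T])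
  let ?qA = "inv_into (s_carrier A) pA"
  let ?q1 = "inv_into (s_carrier B1) p1"
  let ?q2 = "inv_into (s_carrier B2) p2"
  have f1': "emb fa ra A' B1' (\<lambda>x. p1 (f1 (?qA x)))"
    using emb_comp'[OF emb_comp'[OF iso_emb[OF A'(3)] f1] iso_emb[OF B1'(2)]] .
  have f2': "emb fa ra A' B2' (\<lambda>x. p2 (f2 (?qA x)))"
    using emb_comp'[OF emb_comp'[OF iso_emb[OF A'(3)] f2] iso_emb[OF B2'(2)]] .
  have h1': "hom fa ra B1' T0 (\<lambda>x. pT (h1 (?q1 x)))"
    using hom_comp'[OF hom_comp'[OF emb_hom[OF iso_emb[OF B1'(3)]] h1] emb_hom[OF iso_emb[OF T0(2)]]] .
  have h2': "hom fa ra B2' T0 (\<lambda>x. pT (h2 (?q2 x)))"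
    using hom_comp'[OF hom_comp'[OF emb_hom[OF iso_emb[OF B2'(3)]] h2] emb_hom[OF iso_emb[OF T0(2)]]] .
  have f1A: "\<And>x. x \<in> s_carrier A \<Longrightarrow> f1 x \<in> s_carrier B1" using homD(1)[OF emb_hom[OF f1]] .
  have f2A: "\<And>x. x \<in> s_carrier A \<Longrightarrow> f2 x \<in> s_carrier B2" using homD(1)[OF emb_hom[OF f2]] .
  have eq': "\<forall>x\<in>s_carrier A'. pT (h1 (?q1 (p1 (f1 (?qA x))))) = pT (h2 (?q2 (p2 (f2 (?qA x)))))"
  proof
    fix y assume y: "y \<in> s_carrier A'"
    have a: "?qA y \<in> s_carrier A" using A'(5)[OF y] .
    show "pT (h1 (?q1 (p1 (f1 (?qA y))))) = pT (h2 (?q2 (p2 (f2 (?qA y)))))"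
      using B1'(4)[OF f1A[OF a]] B2'(4)[OF f2A[OF a]] eq a by simp
  qed
  obtain D T' G1 G2 K H where R: "D \<in> C" "T' \<in> C" "emb fa ra B1' D G1" "emb fa ra B2' D G2"
    "\<forall>x\<in>s_carrier A'. G1 (p1 (f1 (?qA x))) = G2 (p2 (f2 (?qA x)))"
    "emb fa ra T0 T' K" "hom fa ra D T' H"
    "\<forall>x\<in>s_carrier B1'. H (G1 x) = K (pT (h1 (?q1 x)))"
    "\<forall>x\<in>s_carrier B2'. H (G2 x) = K (pT (h2 (?q2 x)))"
  proof -
    have "\<exists>D\<in>C. \<exists>T'\<in>C. \<exists>g1 g2 k h. emb fa ra B1' D g1 \<and> emb fa ra B2' D g2 \<and>
            (\<forall>x\<in>s_carrier A'. g1 (p1 (f1 (?qA x))) = g2 (p2 (f2 (?qA x)))) \<and>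
            emb fa ra T0 T' k \<and> hom fa ra D T' h \<and>
            (\<forall>x\<in>s_carrier B1'. h (g1 x) = k (pT (h1 (?q1 x)))) \<and>
            (\<forall>x\<in>s_carrier B2'. h (g2 x) = k (pT (h2 (?q2 x))))"
      by (rule H[unfolded amalgamated_extension_def, rule_format, OF A'(1) B1'(1) B2'(1) T0(1)])
        (use f1' f2' h1' h2' eq' in blast)
    then show ?thesis using that by blast
  qed
  have "emb fa ra B1 D (\<lambda>x. G1 (p1 x))" using emb_comp'[OF iso_emb[OF B1'(2)] R(3)] .
  moreover have "emb fa ra B2 D (\<lambda>x. G2 (p2 x))" using emb_comp'[OF iso_emb[OF B2'(2)] R(4)] .
  moreover have "emb fa ra T T' (\<lambda>x. K (pT x))" using emb_comp'[OF iso_emb[OF T0(2)] R(6)] .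
  moreover have "\<forall>x\<in>s_carrier A. G1 (p1 (f1 x)) = G2 (p2 (f2 x))"
  proof
    fix x assume x: "x \<in> s_carrier A"
    show "G1 (p1 (f1 x)) = G2 (p2 (f2 x))" using R(5) A'(4,6)[OF x] by metis
  qed
  moreover have "\<forall>x\<in>s_carrier B1. H (G1 (p1 x)) = K (pT (h1 x))"
    using R(8) B1'(4,6) by metis
  moreover have "\<forall>x\<in>s_carrier B2. H (G2 (p2 x)) = K (pT (h2 x))"
    using R(9) B2'(4,6) by metis
  ultimately show ?thesis using C_IC[OF R(1)] C_IC[OF R(2)] R(7) by blast
qed

end

context fr
begin

definition fgU :: "nat set \<Rightarrow> bool" where
  "fgU V \<longleftrightarrow> (\<exists>F. finite F \<and> F \<subseteq> s_carrier U \<and> V = gen fa U F)"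

lemma fgU_closed: "fgU V \<Longrightarrow> closed fa U V"
  unfolding fgU_def using gen_closed[OF U_struc] by blast

lemma fgU_sub: "fgU V \<Longrightarrow> V \<subseteq> s_carrier U"
  using fgU_closed[of V] by (simp add: closed_def)

lemma fgU_IC: "fgU V \<Longrightarrow> IC (restr ra U V)"
  unfolding fgU_def using gen_IC by blast

lemma fgU_struc: "fgU V \<Longrightarrow> is_struc fa ra (restr ra U V)"
  using restr_is_struc fgU_closed by blast

lemma RU_struc: "closed fa U V \<Longrightarrow> is_struc fa ra (restr ra U V)"
  using restr_is_struc by blast

lemma restr_emb_id: "closed fa U V \<Longrightarrow> emb fa ra (restr ra U V) U id"
  using restr_substruc unfolding substruc_def by blast

lemma restr_emb_id': "closed fa U V \<Longrightarrow> emb fa ra (restr ra U V) U (\<lambda>x. x)"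
  using restr_emb_id by (simp add: id_def)

lemma image_fgU:
  assumes X: "IC X" and j: "hom fa ra X U j"
  shows "fgU (j ` s_carrier X)"
proof -
  have sx: "is_struc fa ra X" using X by (rule IC_struc)
  obtain G where G: "finite G" "G \<subseteq> s_carrier X" "gen fa X G = s_carrier X"
    using IC_fg[OF X] fin_gen_iff[OF sx] by blast
  have "j ` gen fa X G \<subseteq> gen fa U (j ` (G \<inter> s_carrier X))" using hom_gen_image[OF j sx U_struc] .
  then have 1: "j ` s_carrier X \<subseteq> gen fa U (j ` G)" using G by (simp add: Int_absorb2)
  have c: "closed fa U (j ` s_carrier X)" using hom_image_closed[OF j sx] .
  have "gen fa U (j ` G) \<subseteq> j ` s_carrier X" using gen_least[OF c] G by blast
  moreover have "j ` G \<subseteq> s_carrier U" using G homD(1)[OF j] by blast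
  ultimately show ?thesis unfolding fgU_def using 1 G(1) by blast
qed

lemma fgU_gen_mono: "fgU V \<Longrightarrow> \<exists>F. finite F \<and> F \<subseteq> s_carrier U \<and> V = gen fa U F" by (simp add: fgU_def)

lemma fgU_insert:
  assumes "fgU V"
  shows "\<exists>V'. fgU V' \<and> V \<subseteq> V' \<and> (n \<in> s_carrier U \<longrightarrow> n \<in> V')"
proof -
  obtain F where F: "finite F" "F \<subseteq> s_carrier U" "V = gen fa U F" using assms by (auto simp: fgU_def)
  let ?F = "F \<union> ({n} \<inter> s_carrier U)"
  have F2: "finite ?F" "?F \<subseteq> s_carrier U" using F by auto
  have "fgU (gen fa U ?F)" unfolding fgU_def using F2 by blast
  moreover have "V \<subseteq> gen fa U ?F" unfolding F(3) by (rule gen_mono) blast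
  moreover have "?F \<subseteq> gen fa U ?F" using gen_sub[OF U_struc F2(2)] .
  ultimately show ?thesis by blast
qed

end

locale rt = fr +
  fixes Bs :: "nat set" and e :: "nat \<Rightarrow> nat"
  assumes HAPa: "HAP fa ra C" and AEPa: "amalgamated_extension fa ra C"
    and e_hom: "hom fa ra U U e" and e_idem: "\<forall>x\<in>s_carrier U. e (e x) = e x"
    and e_img: "e ` s_carrier U = Bs"
begin

abbreviation "RB \<equiv> restr ra U Bs"

lemma Bs_closed: "closed fa U Bs"
  using hom_image_closed[OF e_hom U_struc] e_img by simp

lemma Bs_sub: "Bs \<subseteq> s_carrier U" using Bs_closed by (simp add: closed_def)

lemma e_fix: "b \<in> Bs \<Longrightarrow> e b = b"
  using e_img e_idem by auto

lemma e_homB: "hom fa ra U RB e"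
  using hom_into_restr[OF U_struc Bs_sub] e_hom e_img by blast

lemma homB_into: "hom fa ra X RB h \<Longrightarrow> is_struc fa ra X \<Longrightarrow> hom fa ra X U h \<and> h ` s_carrier X \<subseteq> Bs"
  using hom_into_restr[OF _ Bs_sub] by blast

lemma Step1:
  assumes V: "fgU V" and V2: "fgU V2" and sub: "V \<subseteq> V2" and rho: "hom fa ra (restr ra U V) RB \<rho>"
  shows "\<exists>\<rho>2. hom fa ra (restr ra U V2) RB \<rho>2 \<and> (\<forall>v\<in>V. \<rho>2 v = \<rho> v)"
proof -
  have sV: "is_struc fa ra (restr ra U V)" using fgU_struc[OF V] .
  have rU: "hom fa ra (restr ra U V) U \<rho>" and rB: "\<rho> ` V \<subseteq> Bs" using homB_into[OF rho sV] by auto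
  define Ts where "Ts = \<rho> ` V"
  have Ts: "fgU Ts" unfolding Ts_def using image_fgU[OF fgU_IC[OF V] rU] by simp
  have f1: "emb fa ra (restr ra U V) (restr ra U V2) id"
    using emb_into_restr[OF sV fgU_sub[OF V2]] restr_emb_id[OF fgU_closed[OF V]] sub by simp
  have f2: "hom fa ra (restr ra U V) (restr ra U Ts) \<rho>"
    using hom_into_restr[OF sV fgU_sub[OF Ts]] rU Ts_def by simp
  obtain D g1 g2 where D: "IC D" "emb fa ra (restr ra U Ts) D g2" "hom fa ra (restr ra U V2) D g1"
    "\<forall>x\<in>V. g1 (id x) = g2 (\<rho> x)"
    using HAP'[OF HAPa fgU_IC[OF V] fgU_IC[OF V2] fgU_IC[OF Ts] f1 f2] by auto
  obtain j where j: "emb fa ra D U j" "\<forall>x\<in>Ts. j (g2 x) = id x"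
    using EP[OF fgU_IC[OF Ts] D(1) D(2) restr_emb_id[OF fgU_closed[OF Ts]]] by auto
  have "hom fa ra (restr ra U V2) RB (e \<circ> j \<circ> g1)"
    using hom_comp[OF D(3) hom_comp[OF emb_hom[OF j(1)] e_homB]] .
  moreover have "\<forall>v\<in>V. (e \<circ> j \<circ> g1) v = \<rho> v"
  proof
    fix v assume v: "v \<in> V"
    have "\<rho> v \<in> Ts" using v Ts_def by simp
    then have "j (g2 (\<rho> v)) = \<rho> v" using j(2) by simp
    moreover have "\<rho> v \<in> Bs" using rB v by blast
    ultimately show "(e \<circ> j \<circ> g1) v = \<rho> v" using D(4) v e_fix by simp
  qed
  ultimately show ?thesis by blast
qed

end

context rt
begin

lemma Step2:
  assumes V: "fgU V" and rho: "hom fa ra (restr ra U V) RB \<rho>"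
    and D: "IC D" and F: "finite F" "F \<subseteq> s_carrier D"
    and h: "hom fa ra D RB h"
    and f: "emb fa ra (restr ra D (gen fa D F)) U f"
    and fV: "f ` gen fa D F \<subseteq> V"
    and eq: "\<forall>x\<in>gen fa D F. \<rho> (f x) = h x"
  shows "\<exists>V' \<rho>' g. fgU V' \<and> V \<subseteq> V' \<and> hom fa ra (restr ra U V') RB \<rho>' \<and> (\<forall>v\<in>V. \<rho>' v = \<rho> v) \<and>
     emb fa ra D U g \<and> g ` s_carrier D \<subseteq> V' \<and> (\<forall>x\<in>gen fa D F. g x = f x) \<and>
     (\<forall>x\<in>s_carrier D. \<rho>' (g x) = h x)"
proof -
  have sD: "is_struc fa ra D" using D by (rule IC_struc)
  define P where "P = gen fa D F"
  have cP: "closed fa D P" unfolding P_def using gen_closed[OF sD] .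
  define A where "A = restr ra D P"
  have sA: "is_struc fa ra A" unfolding A_def using restr_is_struc[OF cP] .
  have fgA: "fin_gen fa ra A" unfolding A_def P_def using fin_gen_gen[OF sD F] .
  have fA: "emb fa ra A U f" using f unfolding A_def P_def .
  have cfP: "closed fa U (f ` P)" using hom_image_closed[OF emb_hom[OF fA] sA] unfolding A_def by simp
  have iA: "iso fa ra A (restr ra U (f ` P)) f" using emb_image_iso[OF fA sA] unfolding A_def by simp
  have "fin_gen fa ra (restr ra U (f ` P))" using iso_fin_gen[OF iA sA RU_struc[OF cfP] fgA] .
  then have "IC (restr ra U (f ` P))" using restr_IC[OF cfP] by blast
  then have AIC: "IC A" using inC_iso[OF _ iA sA] by blast
  have sV: "is_struc fa ra (restr ra U V)" using fgU_struc[OF V] .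
  have rU: "hom fa ra (restr ra U V) U \<rho>" and rB: "\<rho> ` V \<subseteq> Bs" using homB_into[OF rho sV] by auto
  have hU: "hom fa ra D U h" and hB: "h ` s_carrier D \<subseteq> Bs" using homB_into[OF h sD] by auto
  obtain GV where GV: "finite GV" "GV \<subseteq> s_carrier U" "V = gen fa U GV" using V by (auto simp: fgU_def)
  obtain GD where GD: "finite GD" "GD \<subseteq> s_carrier D" "gen fa D GD = s_carrier D"
    using IC_fg[OF D] fin_gen_iff[OF sD] by blast
  have GVV: "GV \<subseteq> V" using gen_sub[OF U_struc GV(2)] GV(3) by simp
  define Ts where "Ts = gen fa U (\<rho> ` GV \<union> h ` GD)"
  have "\<rho> ` GV \<subseteq> \<rho> ` V" using GVV by (rule image_mono)
  moreover have "h ` GD \<subseteq> h ` s_carrier D" using GD(2) by (rule image_mono)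
  ultimately have gens_B: "\<rho> ` GV \<union> h ` GD \<subseteq> Bs" using rB hB by (meson Un_least order_trans)
  have Ts: "fgU Ts" unfolding fgU_def Ts_def
  proof (rule exI[of _ "\<rho> ` GV \<union> h ` GD"], intro conjI)
    show "finite (\<rho> ` GV \<union> h ` GD)" using GV(1) GD(1) by simp
    show "\<rho> ` GV \<union> h ` GD \<subseteq> s_carrier U" using gens_B Bs_sub by (rule order_trans)
  qed simp
  have "\<rho> ` gen fa (restr ra U V) GV \<subseteq> gen fa U (\<rho> ` (GV \<inter> s_carrier (restr ra U V)))"
    using hom_gen_image[OF rU sV U_struc] .
  moreover have "gen fa (restr ra U V) GV = V" using gen_restr[OF U_struc fgU_closed[OF V] GVV] GV(3) by simp
  moreover have "gen fa U (\<rho> ` GV) \<subseteq> Ts" unfolding Ts_def by (rule gen_mono) blast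
  ultimately have rTs: "\<rho> ` V \<subseteq> Ts" using GVV by (simp add: Int_absorb2)
  have "h ` gen fa D GD \<subseteq> gen fa U (h ` (GD \<inter> s_carrier D))" using hom_gen_image[OF hU sD U_struc] .
  moreover have "gen fa U (h ` GD) \<subseteq> Ts" unfolding Ts_def by (rule gen_mono) blast
  ultimately have hTs: "h ` s_carrier D \<subseteq> Ts" using GD by (simp add: Int_absorb2)
  have TsB: "Ts \<subseteq> Bs" unfolding Ts_def using gen_least[OF Bs_closed] gens_B by blast
  have f1: "emb fa ra A (restr ra U V) f" using emb_into_restr[OF sA fgU_sub[OF V]] fA fV
    unfolding A_def P_def by simp
  have f2: "emb fa ra A D id" unfolding A_def using restr_substruc[OF cP] by (simp add: substruc_def)
  have h1: "hom fa ra (restr ra U V) (restr ra U Ts) \<rho>" using hom_into_restr[OF sV fgU_sub[OF Ts]] rU rTs by simp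
  have h2: "hom fa ra D (restr ra U Ts) h" using hom_into_restr[OF sD fgU_sub[OF Ts]] hU hTs by simp
  have eq': "\<forall>x\<in>s_carrier A. \<rho> (f x) = h (id x)" using eq unfolding A_def P_def by simp
  obtain Dc T' g1 g2 k hh where R: "IC Dc" "IC T'" "emb fa ra (restr ra U V) Dc g1" "emb fa ra D Dc g2"
    "\<forall>x\<in>s_carrier A. g1 (f x) = g2 (id x)"
    "emb fa ra (restr ra U Ts) T' k" "hom fa ra Dc T' hh"
    "\<forall>x\<in>s_carrier (restr ra U V). hh (g1 x) = k (\<rho> x)"
    "\<forall>x\<in>s_carrier D. hh (g2 x) = k (h x)"
    using AEP'[OF AEPa AIC fgU_IC[OF V] D fgU_IC[OF Ts] f1 f2 h1 h2 eq'] by blast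
  obtain j where j: "emb fa ra Dc U j" "\<forall>x\<in>s_carrier (restr ra U V). j (g1 x) = id x"
    using EP[OF fgU_IC[OF V] R(1) R(3) restr_emb_id[OF fgU_closed[OF V]]] by blast
  obtain m where m: "emb fa ra T' U m" "\<forall>x\<in>s_carrier (restr ra U Ts). m (k x) = id x"
    using EP[OF fgU_IC[OF Ts] R(2) R(6) restr_emb_id[OF fgU_closed[OF Ts]]] by blast
  define V' where "V' = j ` s_carrier Dc"
  have V': "fgU V'" unfolding V'_def using image_fgU[OF R(1) emb_hom[OF j(1)]] .
  have sDc: "is_struc fa ra Dc" using IC_struc[OF R(1)] .
  have ij: "iso fa ra Dc (restr ra U V') j" unfolding V'_def using emb_image_iso[OF j(1) sDc] .
  define ji where "ji = inv_into (s_carrier Dc) j"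
  have iji: "iso fa ra (restr ra U V') Dc ji" unfolding ji_def using iso_inv[OF ij fgU_struc[OF V'] sDc] .
  have jij: "\<And>y. y \<in> s_carrier Dc \<Longrightarrow> ji (j y) = y" unfolding ji_def using inv_into_f_f[OF emb_inj[OF j(1)]] .
  define \<rho>' where "\<rho>' = e \<circ> m \<circ> hh \<circ> ji"
  have hr: "hom fa ra (restr ra U V') RB \<rho>'" unfolding \<rho>'_def
    using hom_comp[OF hom_comp[OF hom_comp[OF emb_hom[OF iso_emb[OF iji]] R(7)] emb_hom[OF m(1)]] e_homB]
    by (simp add: comp_assoc)
  have g1V: "\<And>v. v \<in> V \<Longrightarrow> g1 v \<in> s_carrier Dc" using homD(1)[OF emb_hom[OF R(3)]] by simp
  have g2D: "\<And>d. d \<in> s_carrier D \<Longrightarrow> g2 d \<in> s_carrier Dc" using homD(1)[OF emb_hom[OF R(4)]] by simp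
  have VV': "V \<subseteq> V'"
  proof
    fix v assume v: "v \<in> V"
    have "j (g1 v) = v" using j(2) v by simp
    then show "v \<in> V'" unfolding V'_def using g1V[OF v] by (metis image_eqI)
  qed
  have rv: "\<forall>v\<in>V. \<rho>' v = \<rho> v"
  proof
    fix v assume v: "v \<in> V"
    have "ji v = g1 v" using j(2) v jij[OF g1V[OF v]] by simp
    moreover have "hh (g1 v) = k (\<rho> v)" using R(8) v by simp
    moreover have "m (k (\<rho> v)) = \<rho> v" using m(2) rTs v by auto
    moreover have "e (\<rho> v) = \<rho> v" using e_fix rB v by blast
    ultimately show "\<rho>' v = \<rho> v" unfolding \<rho>'_def by simp
  qed
  have ge: "emb fa ra D U (j \<circ> g2)" using emb_comp[OF R(4) j(1)] .
  have gim: "(j \<circ> g2) ` s_carrier D \<subseteq> V'" unfolding V'_def using g2D by auto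
  have gf: "\<forall>x\<in>gen fa D F. (j \<circ> g2) x = f x"
  proof
    fix x assume x: "x \<in> gen fa D F"
    have "g2 x = g1 (f x)" using R(5) x unfolding A_def P_def by simp
    moreover have "f x \<in> V" using fV x by blast
    ultimately show "(j \<circ> g2) x = f x" using j(2) by simp
  qed
  have gh: "\<forall>x\<in>s_carrier D. \<rho>' ((j \<circ> g2) x) = h x"
  proof
    fix d assume d: "d \<in> s_carrier D"
    have "ji (j (g2 d)) = g2 d" using jij[OF g2D[OF d]] .
    moreover have "hh (g2 d) = k (h d)" using R(9) d by simp
    moreover have "m (k (h d)) = h d" using m(2) hTs d by auto
    moreover have "e (h d) = h d" using e_fix hB d by blast
    ultimately show "\<rho>' ((j \<circ> g2) d) = h d" unfolding \<rho>'_def by simp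
  qed
  show ?thesis using V' VV' hr rv ge gim gf gh by blast
qed

end

context fixes fa :: "'f \<Rightarrow> nat" and ra :: "'r \<Rightarrow> nat"
begin

lemma iso_gen:
  assumes i: "iso fa ra X Y \<phi>" and sx: "is_struc fa ra X" and sy: "is_struc fa ra Y" and G: "G \<subseteq> s_carrier X"
  shows "gen fa Y (\<phi> ` G) = \<phi> ` gen fa X G"
proof
  have "\<phi> ` gen fa X G \<subseteq> gen fa Y (\<phi> ` (G \<inter> s_carrier X))" using hom_gen_image[OF emb_hom[OF iso_emb[OF i]] sx sy] .
  then show "\<phi> ` gen fa X G \<subseteq> gen fa Y (\<phi> ` G)" using G by (simp add: Int_absorb2)
  have gX: "gen fa X G \<subseteq> s_carrier X" using gen_carrier[OF sx] .
  have cg: "closed fa X (gen fa X G)" using gen_closed[OF sx] .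
  have e: "emb fa ra (restr ra X (gen fa X G)) Y \<phi>" using emb_from_restr[OF gX iso_emb[OF i]] .
  have "closed fa Y (\<phi> ` gen fa X G)"
    using hom_image_closed[OF emb_hom[OF e] restr_is_struc[OF cg]] by simp
  moreover have "\<phi> ` G \<inter> s_carrier Y \<subseteq> \<phi> ` gen fa X G" using gen_sub[OF sx G] by blast
  ultimately show "gen fa Y (\<phi> ` G) \<subseteq> \<phi> ` gen fa X G" by (rule gen_least)
qed

end

definition lk :: "(nat \<times> nat) list \<Rightarrow> nat \<Rightarrow> nat" where
  "lk L x = (case map_of L x of Some y \<Rightarrow> y | None \<Rightarrow> 0)"

lemma lk_map: "x \<in> set xs \<Longrightarrow> lk (map (\<lambda>x. (x, h x)) xs) x = h x"
  by (induct xs) (auto simp: lk_def)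

type_synonym task = "nat \<times> nat list \<times> (nat \<times> nat) list \<times> (nat \<times> nat) list"

context rt
begin

definition Srep where "Srep = (SOME S. S \<subseteq> C \<and> countable S \<and> (\<forall>A\<in>C. \<exists>B\<in>S. isomorphic fa ra A B))"

lemma Srep: "Srep \<subseteq> C" "countable Srep" "\<forall>A\<in>C. \<exists>B\<in>Srep. isomorphic fa ra A B"
proof -
  have "\<exists>S. S \<subseteq> C \<and> countable S \<and> (\<forall>A\<in>C. \<exists>B\<in>S. isomorphic fa ra A B)"
    using fc unfolding fraisse_class_def is_age_def by blast
  then have "Srep \<subseteq> C \<and> countable Srep \<and> (\<forall>A\<in>C. \<exists>B\<in>Srep. isomorphic fa ra A B)"
    unfolding Srep_def by (rule someI_ex)
  then show "Srep \<subseteq> C" "countable Srep" "\<forall>A\<in>C. \<exists>B\<in>Srep. isomorphic fa ra A B" by auto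
qed

definition GDof where
  "GDof D = (SOME G. finite G \<and> G \<subseteq> s_carrier D \<and> gen fa D G = s_carrier D)"

lemma GDof: "IC D \<Longrightarrow> finite (GDof D) \<and> GDof D \<subseteq> s_carrier D \<and> gen fa D (GDof D) = s_carrier D"
proof -
  assume D: "IC D"
  have "\<exists>G. finite G \<and> G \<subseteq> s_carrier D \<and> gen fa D G = s_carrier D"
    using IC_fg[OF D] fin_gen_iff[OF IC_struc[OF D]] by blast
  then show ?thesis unfolding GDof_def by (rule someI_ex)
qed

definition Dt where "Dt (t::task) = from_nat_into Srep (fst t)"
definition Ft :: "task \<Rightarrow> nat set" where "Ft t = set (fst (snd t))"
definition Lht :: "task \<Rightarrow> (nat \<times> nat) list" where "Lht t = fst (snd (snd t))"
definition Lft :: "task \<Rightarrow> (nat \<times> nat) list" where "Lft t = snd (snd (snd t))"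

definition taskP where
  "taskP (t::task) (V::nat set) (\<rho>::nat\<Rightarrow>nat) (h::nat\<Rightarrow>nat) (f::nat\<Rightarrow>nat) \<longleftrightarrow> Srep \<noteq> {} \<and> Ft t \<subseteq> s_carrier (Dt t) \<and> hom fa ra (Dt t) RB h \<and>
     emb fa ra (restr ra (Dt t) (gen fa (Dt t) (Ft t))) U f \<and> f ` gen fa (Dt t) (Ft t) \<subseteq> V \<and>
     (\<forall>x\<in>gen fa (Dt t) (Ft t). \<rho> (f x) = h x) \<and>
     (\<forall>x\<in>GDof (Dt t). h x = lk (Lht t) x) \<and> (\<forall>x\<in>Ft t. f x = lk (Lft t) x)"

definition nextOK where
  "nextOK (t::task) (n::nat) (V::nat set) (\<rho>::nat\<Rightarrow>nat) (V'::nat set) (\<rho>'::nat\<Rightarrow>nat) \<longleftrightarrow> fgU V' \<and> V \<subseteq> V' \<and> (n \<in> s_carrier U \<longrightarrow> n \<in> V') \<and>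
     hom fa ra (restr ra U V') RB \<rho>' \<and> (\<forall>v\<in>V. \<rho>' v = \<rho> v) \<and>
     (\<forall>h f. taskP t V \<rho> h f \<longrightarrow> (\<exists>g. emb fa ra (Dt t) U g \<and> g ` s_carrier (Dt t) \<subseteq> V' \<and>
        (\<forall>x\<in>gen fa (Dt t) (Ft t). g x = f x) \<and> (\<forall>x\<in>s_carrier (Dt t). \<rho>' (g x) = h x)))"

lemma Dt_IC: "Srep \<noteq> {} \<Longrightarrow> IC (Dt t)"
proof -
  assume "Srep \<noteq> {}"
  then have "Dt t \<in> Srep" unfolding Dt_def by (rule from_nat_into)
  then show ?thesis using Srep(1) C_IC by blast
qed

lemma taskP_unique:
  assumes a: "taskP t V \<rho> h f" and b: "taskP t V \<rho> h' f'"
  shows "\<forall>x\<in>s_carrier (Dt t). h x = h' x" "\<forall>x\<in>gen fa (Dt t) (Ft t). f x = f' x"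
proof -
  have ne: "Srep \<noteq> {}" using a taskP_def by simp
  have D: "IC (Dt t)" using Dt_IC[OF ne] .
  have sD: "is_struc fa ra (Dt t)" using IC_struc[OF D] .
  have G: "finite (GDof (Dt t))" "GDof (Dt t) \<subseteq> s_carrier (Dt t)" "gen fa (Dt t) (GDof (Dt t)) = s_carrier (Dt t)"
    using GDof[OF D] by auto
  have hh: "hom fa ra (Dt t) RB h" "hom fa ra (Dt t) RB h'" using a b by (auto simp: taskP_def)
  have eqG: "\<And>x. x \<in> GDof (Dt t) \<Longrightarrow> x \<in> s_carrier (Dt t) \<Longrightarrow> h x = h' x" using a b by (auto simp: taskP_def)
  show "\<forall>x\<in>s_carrier (Dt t). h x = h' x"
    using hom_eq_gen[OF hh(1) hh(2) sD eqG] G(3) by blast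
  have Fsub: "Ft t \<subseteq> s_carrier (Dt t)" using a by (simp add: taskP_def)
  have cP: "closed fa (Dt t) (gen fa (Dt t) (Ft t))" using gen_closed[OF sD] .
  have sP: "is_struc fa ra (restr ra (Dt t) (gen fa (Dt t) (Ft t)))" using restr_is_struc[OF cP] .
  have ff: "hom fa ra (restr ra (Dt t) (gen fa (Dt t) (Ft t))) U f" "hom fa ra (restr ra (Dt t) (gen fa (Dt t) (Ft t))) U f'"
    using a b by (auto simp: taskP_def emb_def)
  have eqF: "\<And>x. x \<in> Ft t \<Longrightarrow> x \<in> s_carrier (restr ra (Dt t) (gen fa (Dt t) (Ft t))) \<Longrightarrow> f x = f' x"
    using a b by (auto simp: taskP_def)
  have "gen fa (restr ra (Dt t) (gen fa (Dt t) (Ft t))) (Ft t) = gen fa (Dt t) (Ft t)"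
    using gen_restr[OF sD cP gen_sub[OF sD Fsub]] .
  then show "\<forall>x\<in>gen fa (Dt t) (Ft t). f x = f' x"
    using hom_eq_gen[OF ff(1) ff(2) sP eqF] by auto
qed

lemma next_ex:
  assumes V: "fgU V" and rho: "hom fa ra (restr ra U V) RB \<rho>"
  shows "\<exists>V' \<rho>'. nextOK t n V \<rho> V' \<rho>'"
proof -
  obtain V1 \<rho>1 where V1: "fgU V1" "V \<subseteq> V1" "hom fa ra (restr ra U V1) RB \<rho>1" "\<forall>v\<in>V. \<rho>1 v = \<rho> v"
    and T: "\<forall>h f. taskP t V \<rho> h f \<longrightarrow> (\<exists>g. emb fa ra (Dt t) U g \<and> g ` s_carrier (Dt t) \<subseteq> V1 \<and>
        (\<forall>x\<in>gen fa (Dt t) (Ft t). g x = f x) \<and> (\<forall>x\<in>s_carrier (Dt t). \<rho>1 (g x) = h x))"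
  proof (cases "\<exists>h f. taskP t V \<rho> h f")
    case False
    then show ?thesis using that[of V \<rho>] V rho by blast
  next
    case True
    then obtain h0 f0 where t0: "taskP t V \<rho> h0 f0" by blast
    have ne: "Srep \<noteq> {}" using t0 taskP_def by simp
    have D: "IC (Dt t)" using Dt_IC[OF ne] .
    have F: "finite (Ft t)" "Ft t \<subseteq> s_carrier (Dt t)" using t0 by (auto simp: Ft_def taskP_def)
    have tt: "hom fa ra (Dt t) RB h0" "emb fa ra (restr ra (Dt t) (gen fa (Dt t) (Ft t))) U f0"
      "f0 ` gen fa (Dt t) (Ft t) \<subseteq> V" "\<forall>x\<in>gen fa (Dt t) (Ft t). \<rho> (f0 x) = h0 x"
      using t0 by (auto simp: taskP_def)
    obtain V1 \<rho>1 g where S: "fgU V1" "V \<subseteq> V1" "hom fa ra (restr ra U V1) RB \<rho>1" "\<forall>v\<in>V. \<rho>1 v = \<rho> v"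
      "emb fa ra (Dt t) U g" "g ` s_carrier (Dt t) \<subseteq> V1" "\<forall>x\<in>gen fa (Dt t) (Ft t). g x = f0 x"
      "\<forall>x\<in>s_carrier (Dt t). \<rho>1 (g x) = h0 x"
      using Step2[OF V rho D F tt] by blast
    have "\<forall>h f. taskP t V \<rho> h f \<longrightarrow> (\<exists>g. emb fa ra (Dt t) U g \<and> g ` s_carrier (Dt t) \<subseteq> V1 \<and>
        (\<forall>x\<in>gen fa (Dt t) (Ft t). g x = f x) \<and> (\<forall>x\<in>s_carrier (Dt t). \<rho>1 (g x) = h x))"
    proof (intro allI impI)
      fix h f assume tf: "taskP t V \<rho> h f"
      have u1: "\<forall>x\<in>s_carrier (Dt t). h0 x = h x" and u2: "\<forall>x\<in>gen fa (Dt t) (Ft t). f0 x = f x"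
        using taskP_unique[OF t0 tf] by auto
      show "\<exists>g. emb fa ra (Dt t) U g \<and> g ` s_carrier (Dt t) \<subseteq> V1 \<and>
        (\<forall>x\<in>gen fa (Dt t) (Ft t). g x = f x) \<and> (\<forall>x\<in>s_carrier (Dt t). \<rho>1 (g x) = h x)"
        using S(5-8) u1 u2 by auto
    qed
    then show ?thesis using that[of V1 \<rho>1] S(1-4) by blast
  qed
  obtain V2 where V2: "fgU V2" "V1 \<subseteq> V2" "n \<in> s_carrier U \<longrightarrow> n \<in> V2" using fgU_insert[OF V1(1)] by blast
  obtain \<rho>2 where r2: "hom fa ra (restr ra U V2) RB \<rho>2" "\<forall>v\<in>V1. \<rho>2 v = \<rho>1 v"
    using Step1[OF V1(1) V2(1) V2(2) V1(3)] by blast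
  have "nextOK t n V \<rho> V2 \<rho>2" unfolding nextOK_def
  proof (intro conjI allI impI)
    show "fgU V2" by fact
    show "V \<subseteq> V2" using V1(2) V2(2) by blast
    show "n \<in> s_carrier U \<Longrightarrow> n \<in> V2" using V2(3) by blast
    show "hom fa ra (restr ra U V2) RB \<rho>2" by fact
    show "\<forall>v\<in>V. \<rho>2 v = \<rho> v" using r2(2) V1(2,4) by auto
    fix h f assume "taskP t V \<rho> h f"
    then obtain g where g: "emb fa ra (Dt t) U g" "g ` s_carrier (Dt t) \<subseteq> V1"
        "\<forall>x\<in>gen fa (Dt t) (Ft t). g x = f x" "\<forall>x\<in>s_carrier (Dt t). \<rho>1 (g x) = h x" using T by blast
    have "\<forall>x\<in>s_carrier (Dt t). \<rho>2 (g x) = h x" using g(2,4) r2(2) by auto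
    then show "\<exists>g. emb fa ra (Dt t) U g \<and> g ` s_carrier (Dt t) \<subseteq> V2 \<and>
        (\<forall>x\<in>gen fa (Dt t) (Ft t). g x = f x) \<and> (\<forall>x\<in>s_carrier (Dt t). \<rho>2 (g x) = h x)"
      using g V2(2) by blast
  qed
  then show ?thesis by blast
qed

end

context rt
begin

definition tsk :: "nat \<Rightarrow> task" where "tsk n = from_nat (fst (prod_decode n))"

definition st where
  "st = rec_nat (gen fa U {}, id) (\<lambda>n p. SOME q. nextOK (tsk n) n (fst p) (snd p) (fst q) (snd q))"

definition Vs where "Vs n = fst (st n)"
definition rs where "rs n = snd (st n)"

lemma st_0: "st 0 = (gen fa U {}, id)" by (simp add: st_def)
lemma st_Suc: "st (Suc n) = (SOME q. nextOK (tsk n) n (Vs n) (rs n) (fst q) (snd q))"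
  by (simp add: st_def Vs_def rs_def)

lemma base: "fgU (gen fa U {}) \<and> hom fa ra (restr ra U (gen fa U {})) RB id"
proof
  show f: "fgU (gen fa U {})" unfolding fgU_def by blast
  have c: "closed fa U (gen fa U {})" using fgU_closed[OF f] .
  have "gen fa U {} \<subseteq> Bs" using gen_least[OF Bs_closed] by blast
  then show "hom fa ra (restr ra U (gen fa U {})) RB id"
    using hom_into_restr[OF RU_struc[OF c] Bs_sub] emb_hom[OF restr_emb_id[OF c]] by simp
qed

lemma inv_step: "fgU (Vs n) \<and> hom fa ra (restr ra U (Vs n)) RB (rs n) \<and>
  nextOK (tsk n) n (Vs n) (rs n) (Vs (Suc n)) (rs (Suc n))"
proof (induct n)
  case 0
  have b: "fgU (Vs 0)" "hom fa ra (restr ra U (Vs 0)) RB (rs 0)" using base by (auto simp: Vs_def rs_def st_0)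
  obtain V' \<rho>' where "nextOK (tsk 0) 0 (Vs 0) (rs 0) V' \<rho>'" using next_ex[OF b] by blast
  then have "\<exists>q. nextOK (tsk 0) 0 (Vs 0) (rs 0) (fst q) (snd q)" by auto
  then have "nextOK (tsk 0) 0 (Vs 0) (rs 0) (fst (st (Suc 0))) (snd (st (Suc 0)))"
    unfolding st_Suc by (rule someI_ex)
  then show ?case using b by (simp add: Vs_def rs_def)
next
  case (Suc n)
  then have b: "fgU (Vs (Suc n))" "hom fa ra (restr ra U (Vs (Suc n))) RB (rs (Suc n))"
    by (auto simp: nextOK_def)
  obtain V' \<rho>' where "nextOK (tsk (Suc n)) (Suc n) (Vs (Suc n)) (rs (Suc n)) V' \<rho>'" using next_ex[OF b] by blast
  then have "\<exists>q. nextOK (tsk (Suc n)) (Suc n) (Vs (Suc n)) (rs (Suc n)) (fst q) (snd q)" by auto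
  then have "nextOK (tsk (Suc n)) (Suc n) (Vs (Suc n)) (rs (Suc n)) (fst (st (Suc (Suc n)))) (snd (st (Suc (Suc n))))"
    unfolding st_Suc by (rule someI_ex)
  then show ?case using b by (simp add: Vs_def rs_def)
qed

lemma Vs_fgU: "fgU (Vs n)" using inv_step by blast
lemma rs_hom: "hom fa ra (restr ra U (Vs n)) RB (rs n)" using inv_step by blast
lemma nextOK_n: "nextOK (tsk n) n (Vs n) (rs n) (Vs (Suc n)) (rs (Suc n))" using inv_step by blast

lemma Vs_Suc: "Vs n \<subseteq> Vs (Suc n)" using nextOK_n[of n] by (simp add: nextOK_def)
lemma rs_Suc: "v \<in> Vs n \<Longrightarrow> rs (Suc n) v = rs n v" using nextOK_n[of n] by (simp add: nextOK_def)

lemma Vs_mono: "m \<le> n \<Longrightarrow> Vs m \<subseteq> Vs n"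
proof (induct n)
  case 0 then show ?case by simp
next
  case (Suc n) then show ?case using Vs_Suc[of n] by (auto simp: le_Suc_eq)
qed

lemma rs_mono: "m \<le> n \<Longrightarrow> v \<in> Vs m \<Longrightarrow> rs n v = rs m v"
proof (induct n)
  case 0 then show ?case by simp
next
  case (Suc n)
  show ?case
  proof (cases "m \<le> n")
    case True
    then have "v \<in> Vs n" using Vs_mono Suc(3) by blast
    then show ?thesis using rs_Suc Suc True by simp
  next
    case False then have "m = Suc n" using Suc(2) by simp
    then show ?thesis by simp
  qed
qed

lemma Vs_cover: "x \<in> s_carrier U \<Longrightarrow> x \<in> Vs (Suc x)"
  using nextOK_n[of x] by (simp add: nextOK_def)

lemma Vs_sub: "Vs n \<subseteq> s_carrier U" using fgU_sub[OF Vs_fgU] .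

lemma finite_in_Vs: "finite X \<Longrightarrow> X \<subseteq> s_carrier U \<Longrightarrow> \<exists>N. X \<subseteq> Vs N"
proof (induct X rule: finite_induct)
  case empty then show ?case by blast
next
  case (insert x X)
  then obtain N where N: "X \<subseteq> Vs N" by blast
  have "X \<subseteq> Vs (max N (Suc x))" using N Vs_mono[of N "max N (Suc x)"] by auto
  moreover have "x \<in> Vs (max N (Suc x))" using Vs_cover[of x] insert(4) Vs_mono[of "Suc x" "max N (Suc x)"] by auto
  ultimately show ?case by blast
qed

definition rinf where "rinf x = rs (Suc x) x"

lemma rinf_eq: "x \<in> Vs n \<Longrightarrow> rinf x = rs n x"
proof -
  assume x: "x \<in> Vs n"
  have "x \<in> Vs (Suc x)" using Vs_cover Vs_sub x by blast
  then have "rs (max n (Suc x)) x = rs (Suc x) x" using rs_mono[of "Suc x" "max n (Suc x)"] by simp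
  moreover have "rs (max n (Suc x)) x = rs n x" using rs_mono[of n "max n (Suc x)"] x by simp
  ultimately show ?thesis unfolding rinf_def by simp
qed

lemma rinf_hom: "hom fa ra U RB rinf"
  unfolding hom_def
proof (intro conjI ballI allI)
  fix x assume x: "x \<in> s_carrier U"
  have "x \<in> Vs (Suc x)" using Vs_cover[OF x] .
  then show "rinf x \<in> s_carrier RB" using homD(1)[OF rs_hom[of "Suc x"]] rinf_eq by simp
next
  fix f xs assume xs: "xs \<in> args (fa f) (s_carrier U)"
  obtain N where N: "set xs \<subseteq> Vs N" using finite_in_Vs[of "set xs"] xs by (auto simp: args_def)
  have xsN: "xs \<in> args (fa f) (s_carrier (restr ra U (Vs N)))" using xs N by (simp add: args_def)
  have "s_fun U f xs \<in> Vs N" using fgU_closed[OF Vs_fgU[of N]] xsN by (simp add: closed_def)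
  then have "rinf (s_fun U f xs) = rs N (s_fun U f xs)" by (rule rinf_eq)
  also have "\<dots> = s_fun RB f (map (rs N) xs)" using homD(2)[OF rs_hom xsN] by simp
  also have "map (rs N) xs = map rinf xs" using N rinf_eq by (auto intro!: map_cong)
  finally show "rinf (s_fun U f xs) = s_fun RB f (map rinf xs)" .
next
  fix r xs assume xs: "xs \<in> s_rel U r"
  have xa: "xs \<in> args (ra r) (s_carrier U)" using U_struc xs by (auto simp: is_struc_def)
  obtain N where N: "set xs \<subseteq> Vs N" using finite_in_Vs[of "set xs"] xa by (auto simp: args_def)
  have "xs \<in> s_rel (restr ra U (Vs N)) r" using xs xa N by (simp add: args_def)
  then have "map (rs N) xs \<in> s_rel RB r" using homD(3)[OF rs_hom] by blast
  moreover have "map (rs N) xs = map rinf xs" using N rinf_eq by (auto intro!: map_cong)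
  ultimately show "map rinf xs \<in> s_rel RB r" by simp
qed

lemma CEP_core:
  assumes D: "D \<in> Srep" and F: "finite F" "F \<subseteq> s_carrier D"
    and h: "hom fa ra D RB h" and f: "emb fa ra (restr ra D (gen fa D F)) U f"
    and eq: "\<forall>x\<in>gen fa D F. rinf (f x) = h x"
  shows "\<exists>g. emb fa ra D U g \<and> (\<forall>x\<in>gen fa D F. g x = f x) \<and> (\<forall>x\<in>s_carrier D. rinf (g x) = h x)"
proof -
  have DI: "IC D" using D Srep(1) C_IC by blast
  have sD: "is_struc fa ra D" using IC_struc[OF DI] .
  have cP: "closed fa D (gen fa D F)" using gen_closed[OF sD] .
  have sP: "is_struc fa ra (restr ra D (gen fa D F))" using restr_is_struc[OF cP] .
  have FP: "F \<subseteq> gen fa D F" using gen_sub[OF sD F(2)] .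
  have "f ` gen fa (restr ra D (gen fa D F)) F \<subseteq> gen fa U (f ` (F \<inter> gen fa D F))"
    using hom_gen_image[OF emb_hom[OF f] sP U_struc] by simp
  moreover have "gen fa (restr ra D (gen fa D F)) F = gen fa D F" using gen_restr[OF sD cP FP] .
  ultimately have fP: "f ` gen fa D F \<subseteq> gen fa U (f ` F)" using FP by (simp add: Int_absorb2)
  have fF: "f ` F \<subseteq> s_carrier U" using homD(1)[OF emb_hom[OF f]] FP by auto
  obtain m where m: "f ` F \<subseteq> Vs m" using finite_in_Vs[OF _ fF] F(1) by blast
  have "gen fa U (f ` F) \<subseteq> Vs m" using gen_least[OF fgU_closed[OF Vs_fgU[of m]]] m by blast
  with fP have fPm: "f ` gen fa D F \<subseteq> Vs m" by blast
  obtain i where i: "from_nat_into Srep i = D" using from_nat_into_surj[OF Srep(2) D] by blast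
  define Fa where "Fa = sorted_list_of_set F"
  have Fa: "set Fa = F" unfolding Fa_def using F(1) by simp
  define Lh where "Lh = map (\<lambda>x. (x, h x)) (sorted_list_of_set (GDof D))"
  define Lf where "Lf = map (\<lambda>x. (x, f x)) Fa"
  define t where "t = (i, Fa, Lh, Lf)"
  define n where "n = prod_encode (to_nat t, m)"
  have tn: "tsk n = t" unfolding tsk_def n_def by simp
  have mn: "m \<le> n" unfolding n_def by (rule le_prod_encode_2)
  have Dt: "Dt t = D" unfolding Dt_def t_def using i by simp
  have Ft: "Ft t = F" unfolding Ft_def t_def using Fa by simp
  have GD: "finite (GDof D)" using GDof[OF DI] by blast
  have tP: "taskP t (Vs n) (rs n) h f" unfolding taskP_def Dt Ft
  proof (intro conjI ballI)
    show "Srep \<noteq> {}" using D by blast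
    show "F \<subseteq> s_carrier D" by fact
    show "hom fa ra D RB h" by fact
    show "emb fa ra (restr ra D (gen fa D F)) U f" by fact
    show "f ` gen fa D F \<subseteq> Vs n" using fPm Vs_mono[OF mn] by blast
    fix x assume x: "x \<in> gen fa D F"
    then have "f x \<in> Vs n" using fPm Vs_mono[OF mn] by blast
    then show "rs n (f x) = h x" using eq x rinf_eq by metis
  next
    fix x assume "x \<in> GDof D"
    then show "h x = lk (Lht t) x" unfolding Lht_def t_def Lh_def using GD by (simp add: lk_map)
  next
    fix x assume "x \<in> F"
    then show "f x = lk (Lft t) x" unfolding Lft_def t_def Lf_def using Fa by (simp add: lk_map)
  qed
  obtain g where g: "emb fa ra D U g" "g ` s_carrier D \<subseteq> Vs (Suc n)"
    "\<forall>x\<in>gen fa D F. g x = f x" "\<forall>x\<in>s_carrier D. rs (Suc n) (g x) = h x"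
    using nextOK_n[of n] tP unfolding nextOK_def tn Dt Ft by blast
  have "\<forall>x\<in>s_carrier D. rinf (g x) = h x" using g(2,4) rinf_eq by auto
  then show ?thesis using g(1,3) by blast
qed

end

context fixes fa :: "'f \<Rightarrow> nat" and ra :: "'r \<Rightarrow> nat"
begin

lemma closed_restr: "closed fa X P \<Longrightarrow> P \<subseteq> Q \<Longrightarrow> closed fa (restr ra X Q) P"
  by (simp add: closed_def)

lemma chain_emb:
  assumes sX: "is_struc fa ra X" and mono: "\<And>m n. m \<le> n \<Longrightarrow> Q m \<subseteq> Q n"
    and cl: "\<And>n. closed fa X (Q n)" and cov: "\<And>x. x \<in> s_carrier X \<Longrightarrow> x \<in> Q (Suc x)"
    and em: "\<And>n. emb fa ra (restr ra X (Q n)) W (k n)"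
    and cons: "\<And>m n x. m \<le> n \<Longrightarrow> x \<in> Q m \<Longrightarrow> k n x = k m x"
  shows "emb fa ra X W (\<lambda>x. k (Suc x) x)" "\<And>n x. x \<in> Q n \<Longrightarrow> k (Suc x) x = k n x"
proof -
  have QX: "\<And>n. Q n \<subseteq> s_carrier X" using cl by (simp add: closed_def)
  show eqn: "\<And>n x. x \<in> Q n \<Longrightarrow> k (Suc x) x = k n x"
  proof -
    fix n x assume x: "x \<in> Q n"
    have "x \<in> Q (Suc x)" using cov QX x by blast
    then have "k (max n (Suc x)) x = k (Suc x) x" using cons[of "Suc x" "max n (Suc x)"] by simp
    moreover have "k (max n (Suc x)) x = k n x" using cons[of n "max n (Suc x)"] x by simp
    ultimately show "k (Suc x) x = k n x" by simp
  qed
  have fin: "\<And>Y. finite Y \<Longrightarrow> Y \<subseteq> s_carrier X \<Longrightarrow> \<exists>N. Y \<subseteq> Q N"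
  proof -
    fix Y assume "finite Y" "Y \<subseteq> s_carrier X"
    then show "\<exists>N. Y \<subseteq> Q N"
    proof (induct Y rule: finite_induct)
      case empty then show ?case by blast
    next
      case (insert x Y)
      then obtain N where N: "Y \<subseteq> Q N" by blast
      have "Y \<subseteq> Q (max N (Suc x))" using N mono[of N "max N (Suc x)"] by auto
      moreover have "x \<in> Q (max N (Suc x))" using cov[of x] insert(4) mono[of "Suc x" "max N (Suc x)"] by auto
      ultimately show ?case by blast
    qed
  qed
  let ?k = "\<lambda>x. k (Suc x) x"
  have mapk: "\<And>xs N. set xs \<subseteq> Q N \<Longrightarrow> map ?k xs = map (k N) xs"
    using eqn by (auto intro!: map_cong)
  have h: "hom fa ra X W ?k" unfolding hom_def
  proof (intro conjI ballI allI)
    fix x assume x: "x \<in> s_carrier X"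
    have "x \<in> Q (Suc x)" using cov[OF x] .
    then show "?k x \<in> s_carrier W" using homD(1)[OF emb_hom[OF em[of "Suc x"]]] by simp
  next
    fix f xs assume xs: "xs \<in> args (fa f) (s_carrier X)"
    obtain N where N: "set xs \<subseteq> Q N" using fin[of "set xs"] xs by (auto simp: args_def)
    have xsN: "xs \<in> args (fa f) (s_carrier (restr ra X (Q N)))" using xs N by (simp add: args_def)
    have "s_fun X f xs \<in> Q N" using cl[of N] xsN by (simp add: closed_def)
    then have "?k (s_fun X f xs) = k N (s_fun X f xs)" by (rule eqn)
    also have "\<dots> = s_fun W f (map (k N) xs)" using homD(2)[OF emb_hom[OF em] xsN] by simp
    also have "map (k N) xs = map ?k xs" using mapk[OF N] by simp
    finally show "?k (s_fun X f xs) = s_fun W f (map ?k xs)" .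
  next
    fix r xs assume xs: "xs \<in> s_rel X r"
    have xa: "xs \<in> args (ra r) (s_carrier X)" using sX xs by (auto simp: is_struc_def)
    obtain N where N: "set xs \<subseteq> Q N" using fin[of "set xs"] xa by (auto simp: args_def)
    have "xs \<in> s_rel (restr ra X (Q N)) r" using xs xa N by (simp add: args_def)
    then have "map (k N) xs \<in> s_rel W r" using homD(3)[OF emb_hom[OF em]] by blast
    then show "map ?k xs \<in> s_rel W r" by (subst mapk[OF N]) assumption
  qed
  have i: "inj_on ?k (s_carrier X)"
  proof (rule inj_onI)
    fix x y assume x: "x \<in> s_carrier X" and y: "y \<in> s_carrier X" and e: "?k x = ?k y"
    obtain N where N: "{x, y} \<subseteq> Q N" using fin[of "{x,y}"] x y by auto
    have "k N x = k N y" using e eqn N by auto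
    then show "x = y" using inj_onD[OF emb_inj[OF em[of N]]] N by auto
  qed
  have r: "\<forall>r. \<forall>xs\<in>args (ra r) (s_carrier X). map ?k xs \<in> s_rel W r \<longrightarrow> xs \<in> s_rel X r"
  proof (intro allI ballI impI)
    fix r xs assume xa: "xs \<in> args (ra r) (s_carrier X)" and m: "map ?k xs \<in> s_rel W r"
    obtain N where N: "set xs \<subseteq> Q N" using fin[of "set xs"] xa by (auto simp: args_def)
    have xN: "xs \<in> args (ra r) (s_carrier (restr ra X (Q N)))" using xa N by (simp add: args_def)
    have "map (k N) xs \<in> s_rel W r" using m mapk[OF N] by simp
    then have "xs \<in> s_rel (restr ra X (Q N)) r" using em[of N] xN unfolding emb_def by blast
    then show "xs \<in> s_rel X r" by simp
  qed
  show "emb fa ra X W ?k" using h i r unfolding emb_def by blast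
qed

end

context rt
begin

lemma CEP:
  assumes D: "IC D" and cP: "closed fa D P" and fgP: "fin_gen fa ra (restr ra D P)"
    and h: "hom fa ra D RB h" and f: "emb fa ra (restr ra D P) U f"
    and eq: "\<forall>x\<in>P. rinf (f x) = h x"
  shows "\<exists>g. emb fa ra D U g \<and> (\<forall>x\<in>P. g x = f x) \<and> (\<forall>x\<in>s_carrier D. rinf (g x) = h x)"
proof -
  have sD: "is_struc fa ra D" using IC_struc[OF D] .
  obtain Y \<phi>1 where Y: "Y \<in> C" "iso fa ra D Y \<phi>1" using D unfolding inC_def isomorphic_def by blast
  obtain D0 where D0: "D0 \<in> Srep" "isomorphic fa ra Y D0" using Srep(3) Y(1) by blast
  obtain \<phi>2 where p2: "iso fa ra Y D0 \<phi>2" using D0(2) unfolding isomorphic_def by blast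
  define \<phi> where "\<phi> = \<phi>2 \<circ> \<phi>1"
  have ph: "iso fa ra D D0 \<phi>" unfolding \<phi>_def using iso_comp[OF Y(2) p2] .
  have sD0: "is_struc fa ra D0" using C_struc Srep(1) D0(1) by blast
  define \<psi> where "\<psi> = inv_into (s_carrier D) \<phi>"
  have ps: "iso fa ra D0 D \<psi>" unfolding \<psi>_def using iso_inv[OF ph sD0 sD] .
  have inj: "inj_on \<phi> (s_carrier D)" and im: "\<phi> ` s_carrier D = s_carrier D0" using ph by (auto simp: iso_def emb_def)
  have psph: "\<And>x. x \<in> s_carrier D \<Longrightarrow> \<psi> (\<phi> x) = x" unfolding \<psi>_def using inv_into_f_f[OF inj] .
  have sP: "is_struc fa ra (restr ra D P)" using restr_is_struc[OF cP] .
  obtain F where F: "finite F" "F \<subseteq> P" "gen fa (restr ra D P) F = P"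
    using fgP fin_gen_iff[OF sP] by auto
  have PD: "P \<subseteq> s_carrier D" using cP by (simp add: closed_def)
  have genF: "gen fa D F = P" using gen_restr[OF sD cP F(2)] F(3) by simp
  have FD: "F \<subseteq> s_carrier D" using F(2) PD by blast
  define F0 where "F0 = \<phi> ` F"
  have F0: "finite F0" "F0 \<subseteq> s_carrier D0" unfolding F0_def using F(1) FD im by auto
  have gF0: "gen fa D0 F0 = \<phi> ` P" unfolding F0_def using iso_gen[OF ph sD sD0 FD] genF by simp
  have h0: "hom fa ra D0 RB (h \<circ> \<psi>)" using hom_comp[OF emb_hom[OF iso_emb[OF ps]] h] .
  have phP: "\<phi> ` P \<subseteq> s_carrier D0" using PD im by blast
  have cphP: "closed fa D0 (\<phi> ` P)" using gen_closed[OF sD0, of F0] gF0 by simp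
  have e1: "emb fa ra (restr ra D0 (\<phi> ` P)) D \<psi>" using emb_from_restr[OF phP iso_emb[OF ps]] .
  have "\<psi> ` \<phi> ` P \<subseteq> P" using psph PD by auto
  then have e2: "emb fa ra (restr ra D0 (\<phi> ` P)) (restr ra D P) \<psi>"
    using emb_into_restr[OF restr_is_struc[OF cphP] PD] e1 by simp
  have f0: "emb fa ra (restr ra D0 (gen fa D0 F0)) U (f \<circ> \<psi>)" using emb_comp[OF e2 f] gF0 by simp
  have eq0: "\<forall>x\<in>gen fa D0 F0. rinf ((f \<circ> \<psi>) x) = (h \<circ> \<psi>) x"
    using eq psph PD gF0 by auto
  obtain g0 where g0: "emb fa ra D0 U g0" "\<forall>x\<in>gen fa D0 F0. g0 x = (f \<circ> \<psi>) x"
    "\<forall>x\<in>s_carrier D0. rinf (g0 x) = (h \<circ> \<psi>) x"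
    using CEP_core[OF D0(1) F0 h0 f0 eq0] by blast
  have "emb fa ra D U (g0 \<circ> \<phi>)" using emb_comp[OF iso_emb[OF ph] g0(1)] .
  moreover have "\<forall>x\<in>P. (g0 \<circ> \<phi>) x = f x" using g0(2) gF0 psph PD by auto
  moreover have "\<forall>x\<in>s_carrier D. rinf ((g0 \<circ> \<phi>) x) = h x"
  proof
    fix x assume x: "x \<in> s_carrier D"
    have "\<phi> x \<in> s_carrier D0" using im x by blast
    then show "rinf ((g0 \<circ> \<phi>) x) = h x" using g0(3) psph[OF x] by simp
  qed
  ultimately show ?thesis by blast
qed

lemma univ:
  assumes A: "A \<in> closure_class fa ra C" and h: "hom fa ra A RB h"
  shows "\<exists>\<iota>. emb fa ra A U \<iota> \<and> (\<forall>x\<in>s_carrier A. h x = rinf (\<iota> x))"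
proof -
  have sA: "is_struc fa ra A" using A by (simp add: closure_class_def)
  have Acl: "\<And>B. substruc fa ra B A \<Longrightarrow> fin_gen fa ra B \<Longrightarrow> IC B"
    using A unfolding closure_class_def inC_def substruc_def by blast
  define Pn where "Pn n = gen fa A {x\<in>s_carrier A. x < n}" for n
  have finn: "\<And>n. finite {x\<in>s_carrier A. x < n}" by simp
  have subn: "\<And>n. {x\<in>s_carrier A. x < n} \<subseteq> s_carrier A" by blast
  have cl: "\<And>n. closed fa A (Pn n)" unfolding Pn_def using gen_closed[OF sA] .
  have mono: "\<And>m n. m \<le> n \<Longrightarrow> Pn m \<subseteq> Pn n" unfolding Pn_def by (rule gen_mono) auto
  have cov: "\<And>x. x \<in> s_carrier A \<Longrightarrow> x \<in> Pn (Suc x)"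
    unfolding Pn_def using gen_sub[OF sA subn] by auto
  have fgn: "\<And>n. fin_gen fa ra (restr ra A (Pn n))" unfolding Pn_def using fin_gen_gen[OF sA finn subn] .
  have ICn: "\<And>n. IC (restr ra A (Pn n))" using Acl[OF restr_substruc[OF cl] fgn] .
  have hn: "\<And>n. hom fa ra (restr ra A (Pn n)) RB h" using hom_from_restr[OF _ h] cl by (simp add: closed_def)
  define good where "good n g \<longleftrightarrow> emb fa ra (restr ra A (Pn n)) U g \<and> (\<forall>x\<in>Pn n. rinf (g x) = h x)" for n g
  have g0: "\<exists>g. good 0 g"
  proof -
    obtain \<theta> where th: "emb fa ra (restr ra A (Pn 0)) U \<theta>" using IC_emb[OF ICn] by blast
    have s0: "is_struc fa ra (restr ra A (Pn 0))" using restr_is_struc[OF cl] .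
    have "hom fa ra (restr ra A (Pn 0)) RB (rinf \<circ> \<theta>)" using hom_comp[OF emb_hom[OF th] rinf_hom] .
    moreover have "gen fa (restr ra A (Pn 0)) {} = Pn 0"
      using gen_restr[OF sA cl[of 0], of "{}"] unfolding Pn_def by simp
    ultimately have "\<forall>x\<in>Pn 0. (rinf \<circ> \<theta>) x = h x"
      using hom_eq_gen[OF _ hn s0, of "rinf \<circ> \<theta>" "{}"] by auto
    then show ?thesis using th unfolding good_def by auto
  qed
  have gS: "\<And>n g. good n g \<Longrightarrow> \<exists>g'. good (Suc n) g' \<and> (\<forall>x\<in>Pn n. g' x = g x)"
  proof -
    fix n g assume gd: "good n g"
    have sub: "Pn n \<subseteq> Pn (Suc n)" using mono by simp
    have c: "closed fa (restr ra A (Pn (Suc n))) (Pn n)" using closed_restr[OF cl sub] .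
    have rr: "restr ra (restr ra A (Pn (Suc n))) (Pn n) = restr ra A (Pn n)" using restr_restr[OF sub] .
    obtain g' where g': "emb fa ra (restr ra A (Pn (Suc n))) U g'" "\<forall>x\<in>Pn n. g' x = g x"
      "\<forall>x\<in>s_carrier (restr ra A (Pn (Suc n))). rinf (g' x) = h x"
      using CEP[OF ICn c _ hn, of g] rr fgn gd unfolding good_def by auto
    then show "\<exists>g'. good (Suc n) g' \<and> (\<forall>x\<in>Pn n. g' x = g x)" unfolding good_def by auto
  qed
  define io where "io = rec_nat (SOME g. good 0 g) (\<lambda>n g. SOME g'. good (Suc n) g' \<and> (\<forall>x\<in>Pn n. g' x = g x))"
  have io0: "io 0 = (SOME g. good 0 g)" unfolding io_def by simp
  have ioS: "\<And>n. io (Suc n) = (SOME g'. good (Suc n) g' \<and> (\<forall>x\<in>Pn n. g' x = io n x))" unfolding io_def by simp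
  have gio: "\<And>n. good n (io n)"
  proof -
    fix n show "good n (io n)"
    proof (induct n)
      case 0 then show ?case unfolding io0 using g0 by (rule someI_ex)
    next
      case (Suc n)
      have "good (Suc n) (io (Suc n)) \<and> (\<forall>x\<in>Pn n. io (Suc n) x = io n x)"
        unfolding ioS[of n] using gS[OF Suc] by (rule someI_ex)
      then show ?case by blast
    qed
  qed
  have ioc: "\<And>n x. x \<in> Pn n \<Longrightarrow> io (Suc n) x = io n x"
  proof -
    fix n x assume "x \<in> Pn n"
    have "good (Suc n) (io (Suc n)) \<and> (\<forall>x\<in>Pn n. io (Suc n) x = io n x)"
      unfolding ioS[of n] using gS[OF gio] by (rule someI_ex)
    then show "io (Suc n) x = io n x" using \<open>x \<in> Pn n\<close> by blast
  qed
  have cons: "\<And>m n x. m \<le> n \<Longrightarrow> x \<in> Pn m \<Longrightarrow> io n x = io m x"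
  proof -
    fix m n x assume "m \<le> n" "x \<in> Pn m"
    then show "io n x = io m x"
    proof (induct n)
      case 0 then show ?case by simp
    next
      case (Suc n)
      show ?case
      proof (cases "m \<le> n")
        case True
        then have "x \<in> Pn n" using mono Suc(3) by blast
        then show ?thesis using ioc Suc True by simp
      next
        case False then have "m = Suc n" using Suc(2) by simp
        then show ?thesis by simp
      qed
    qed
  qed
  have em: "\<And>n. emb fa ra (restr ra A (Pn n)) U (io n)" using gio unfolding good_def by blast
  have E: "emb fa ra A U (\<lambda>x. io (Suc x) x)" using chain_emb(1)[OF sA mono cl cov em cons] .
  have "\<forall>x\<in>s_carrier A. h x = rinf (io (Suc x) x)"
    using gio cov unfolding good_def by auto
  then show ?thesis using E by blast
qed

end

context rt
begin

definition statep where
  "statep P Q p \<longleftrightarrow> fgU P \<and> fgU Q \<and> iso fa ra (restr ra U P) (restr ra U Q) p \<and> (\<forall>x\<in>P. rinf (p x) = rinf x)"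

lemma forth:
  assumes s: "statep P Q p"
  shows "\<exists>P' p'. fgU P' \<and> P \<subseteq> P' \<and> (n \<in> s_carrier U \<longrightarrow> n \<in> P') \<and> emb fa ra (restr ra U P') U p' \<and>
     (\<forall>x\<in>P. p' x = p x) \<and> (\<forall>x\<in>P'. rinf (p' x) = rinf x)"
proof -
  have P: "fgU P" and Q: "fgU Q" and i: "iso fa ra (restr ra U P) (restr ra U Q) p"
    and cp: "\<forall>x\<in>P. rinf (p x) = rinf x" using s by (auto simp: statep_def)
  obtain P' where P': "fgU P'" "P \<subseteq> P'" "n \<in> s_carrier U \<longrightarrow> n \<in> P'" using fgU_insert[OF P] by blast
  have c: "closed fa (restr ra U P') P" using closed_restr[OF fgU_closed[OF P] P'(2)] .
  have rr: "restr ra (restr ra U P') P = restr ra U P" using restr_restr[OF P'(2)] .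
  have fg: "fin_gen fa ra (restr ra (restr ra U P') P)" using IC_fg[OF fgU_IC[OF P]] rr by simp
  have h: "hom fa ra (restr ra U P') RB rinf" using hom_from_restr[OF fgU_sub[OF P'(1)] rinf_hom] .
  have f: "emb fa ra (restr ra U P) U p"
    using emb_into_restr[OF fgU_struc[OF P] fgU_sub[OF Q]] iso_emb[OF i] by blast
  have f': "emb fa ra (restr ra (restr ra U P') P) U p" using f rr by simp
  have "\<exists>g. emb fa ra (restr ra U P') U g \<and> (\<forall>x\<in>P. g x = p x) \<and>
    (\<forall>x\<in>s_carrier (restr ra U P'). rinf (g x) = rinf x)"
    using CEP[OF fgU_IC[OF P'(1)] c fg h f'] cp by blast
  then obtain g where g: "emb fa ra (restr ra U P') U g" "\<forall>x\<in>P. g x = p x"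
    "\<forall>x\<in>s_carrier (restr ra U P'). rinf (g x) = rinf x" by blast
  then show ?thesis using P' by auto
qed

lemma bf:
  assumes s: "statep P Q p"
  shows "\<exists>P2 Q2 p2. statep P2 Q2 p2 \<and> P \<subseteq> P2 \<and> Q \<subseteq> Q2 \<and> (n \<in> s_carrier U \<longrightarrow> n \<in> P2 \<and> n \<in> Q2) \<and>
     (\<forall>x\<in>P. p2 x = p x)"
proof -
  have P: "fgU P" and Q: "fgU Q" and i: "iso fa ra (restr ra U P) (restr ra U Q) p"
    using s by (auto simp: statep_def)
  obtain P1 p1 where F1: "fgU P1" "P \<subseteq> P1" "n \<in> s_carrier U \<longrightarrow> n \<in> P1" "emb fa ra (restr ra U P1) U p1"
    "\<forall>x\<in>P. p1 x = p x" "\<forall>x\<in>P1. rinf (p1 x) = rinf x" using forth[OF s] by blast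
  define Q1 where "Q1 = p1 ` P1"
  have Q1: "fgU Q1" unfolding Q1_def using image_fgU[OF fgU_IC[OF F1(1)] emb_hom[OF F1(4)]] by simp
  have i1: "iso fa ra (restr ra U P1) (restr ra U Q1) p1" unfolding Q1_def
    using emb_image_iso[OF F1(4) fgU_struc[OF F1(1)]] by simp
  have QQ1: "Q \<subseteq> Q1"
  proof
    fix q assume q: "q \<in> Q"
    have "p ` P = Q" using i by (simp add: iso_def)
    then obtain x where x: "x \<in> P" "q = p x" using q by blast
    have "x \<in> P1" using x(1) F1(2) by blast
    then have "p1 x \<in> p1 ` P1" by blast
    then show "q \<in> Q1" unfolding Q1_def using F1(5) x by simp
  qed
  define q1 where "q1 = inv_into P1 p1"
  have iq1: "iso fa ra (restr ra U Q1) (restr ra U P1) q1" unfolding q1_def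
    using iso_inv[OF i1 fgU_struc[OF Q1] fgU_struc[OF F1(1)]] by simp
  have inj1: "inj_on p1 P1" using emb_inj[OF F1(4)] by simp
  have q1p1: "\<And>x. x \<in> P1 \<Longrightarrow> q1 (p1 x) = x" unfolding q1_def using inv_into_f_f[OF inj1] .
  have s1: "statep Q1 P1 q1" unfolding statep_def
  proof (intro conjI ballI)
    show "fgU Q1" "fgU P1" by fact+
    show "iso fa ra (restr ra U Q1) (restr ra U P1) q1" by fact
    fix y assume "y \<in> Q1"
    then obtain x where x: "x \<in> P1" "y = p1 x" unfolding Q1_def by blast
    then show "rinf (q1 y) = rinf y" using q1p1 F1(6) by simp
  qed
  obtain Q2 q2 where F2: "fgU Q2" "Q1 \<subseteq> Q2" "n \<in> s_carrier U \<longrightarrow> n \<in> Q2" "emb fa ra (restr ra U Q2) U q2"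
    "\<forall>x\<in>Q1. q2 x = q1 x" "\<forall>x\<in>Q2. rinf (q2 x) = rinf x" using forth[OF s1] by blast
  define P2 where "P2 = q2 ` Q2"
  have P2: "fgU P2" unfolding P2_def using image_fgU[OF fgU_IC[OF F2(1)] emb_hom[OF F2(4)]] by simp
  have i2: "iso fa ra (restr ra U Q2) (restr ra U P2) q2" unfolding P2_def
    using emb_image_iso[OF F2(4) fgU_struc[OF F2(1)]] by simp
  define p2 where "p2 = inv_into Q2 q2"
  have ip2: "iso fa ra (restr ra U P2) (restr ra U Q2) p2" unfolding p2_def
    using iso_inv[OF i2 fgU_struc[OF P2] fgU_struc[OF F2(1)]] by simp
  have inj2: "inj_on q2 Q2" using emb_inj[OF F2(4)] by simp
  have p2q2: "\<And>z. z \<in> Q2 \<Longrightarrow> p2 (q2 z) = z" unfolding p2_def using inv_into_f_f[OF inj2] .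
  have key: "\<And>x. x \<in> P1 \<Longrightarrow> q2 (p1 x) = x \<and> p1 x \<in> Q2"
  proof -
    fix x assume x: "x \<in> P1"
    have "p1 x \<in> Q1" unfolding Q1_def using x by blast
    then show "q2 (p1 x) = x \<and> p1 x \<in> Q2" using F2(2,5) q1p1[OF x] by auto
  qed
  have P1P2: "P1 \<subseteq> P2"
  proof
    fix x assume x: "x \<in> P1"
    then show "x \<in> P2" unfolding P2_def using key[OF x] by (metis image_eqI)
  qed
  have p2p1: "\<forall>x\<in>P1. p2 x = p1 x"
  proof
    fix x assume x: "x \<in> P1"
    have "p2 (q2 (p1 x)) = p1 x" using p2q2 key[OF x] by blast
    then show "p2 x = p1 x" using key[OF x] by simp
  qed
  have s2: "statep P2 Q2 p2" unfolding statep_def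
  proof (intro conjI ballI)
    show "fgU P2" "fgU Q2" by fact+
    show "iso fa ra (restr ra U P2) (restr ra U Q2) p2" by fact
    fix y assume "y \<in> P2"
    then obtain z where z: "z \<in> Q2" "y = q2 z" unfolding P2_def by blast
    then show "rinf (p2 y) = rinf y" using p2q2 F2(6) by simp
  qed
  show ?thesis
  proof (intro exI conjI)
    show "statep P2 Q2 p2" by fact
    show "P \<subseteq> P2" using F1(2) P1P2 by blast
    show "Q \<subseteq> Q2" using QQ1 F2(2) by blast
    show "n \<in> s_carrier U \<longrightarrow> n \<in> P2 \<and> n \<in> Q2" using F1(3) P1P2 F2(3) by blast
    show "\<forall>x\<in>P. p2 x = p x" using F1(2,5) p2p1 by auto
  qed
qed

definition BFok where
  "BFok n s s' \<longleftrightarrow> statep (fst s') (fst (snd s')) (snd (snd s')) \<and> fst s \<subseteq> fst s' \<and>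
     fst (snd s) \<subseteq> fst (snd s') \<and> (n \<in> s_carrier U \<longrightarrow> n \<in> fst s' \<and> n \<in> fst (snd s')) \<and>
     (\<forall>x\<in>fst s. snd (snd s') x = snd (snd s) x)"

lemma homog:
  assumes A: "substruc fa ra A U" "fin_gen fa ra A" and i0: "emb fa ra A U \<iota>0"
    and c0: "\<forall>x\<in>s_carrier A. rinf (\<iota>0 x) = rinf x"
  shows "\<exists>\<alpha>. automorphism fa ra U \<alpha> \<and> (\<forall>x\<in>s_carrier U. rinf (\<alpha> x) = rinf x) \<and>
     (\<forall>x\<in>s_carrier A. \<alpha> x = \<iota>0 x)"
proof -
  define P0 where "P0 = s_carrier A"
  define Q0 where "Q0 = \<iota>0 ` s_carrier A"
  have AIC: "IC A" using substruc_IC[OF A] .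
  obtain F0 where F0: "finite F0" "F0 \<subseteq> s_carrier A" "s_carrier A = gen fa U F0"
    using fin_gen_substruc[OF U_struc A] by blast
  have "s_carrier A \<subseteq> s_carrier U" using A(1) by (simp add: substruc_def)
  then have "F0 \<subseteq> s_carrier U" using F0(2) by blast
  then have P0: "fgU P0" unfolding P0_def fgU_def using F0(1,3) by blast
  have Q0: "fgU Q0" unfolding Q0_def using image_fgU[OF AIC emb_hom[OF i0]] .
  have e0: "emb fa ra (restr ra U P0) U \<iota>0" unfolding P0_def
    using emb_comp[OF iso_emb[OF substruc_iso_restr'[OF A(1)]] i0] by simp
  have is0: "iso fa ra (restr ra U P0) (restr ra U Q0) \<iota>0"
    using emb_image_iso[OF e0 fgU_struc[OF P0]] unfolding Q0_def P0_def by simp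
  have st0: "statep P0 Q0 \<iota>0" unfolding statep_def using P0 Q0 is0 c0 P0_def by simp
  define bs where "bs = rec_nat (P0, Q0, \<iota>0) (\<lambda>n s. SOME s'. BFok n s s')"
  have bs0: "bs 0 = (P0, Q0, \<iota>0)" unfolding bs_def by simp
  have bsS: "\<And>n. bs (Suc n) = (SOME s'. BFok n (bs n) s')" unfolding bs_def by simp
  have ex: "\<And>n s. statep (fst s) (fst (snd s)) (snd (snd s)) \<Longrightarrow> \<exists>s'. BFok n s s'"
  proof -
    fix n s assume "statep (fst s) (fst (snd s)) (snd (snd s))"
    from bf[OF this, of n] obtain P2 Q2 p2 where "statep P2 Q2 p2 \<and> fst s \<subseteq> P2 \<and> fst (snd s) \<subseteq> Q2 \<and>
      (n \<in> s_carrier U \<longrightarrow> n \<in> P2 \<and> n \<in> Q2) \<and> (\<forall>x\<in>fst s. p2 x = snd (snd s) x)" by blast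
    then have "BFok n s (P2, Q2, p2)" unfolding BFok_def by simp
    then show "\<exists>s'. BFok n s s'" by blast
  qed
  have inv: "\<And>n. statep (fst (bs n)) (fst (snd (bs n))) (snd (snd (bs n))) \<and> BFok n (bs n) (bs (Suc n))"
  proof -
    fix n show "statep (fst (bs n)) (fst (snd (bs n))) (snd (snd (bs n))) \<and> BFok n (bs n) (bs (Suc n))"
    proof (induct n)
      case 0
      have "statep (fst (bs 0)) (fst (snd (bs 0))) (snd (snd (bs 0)))" using st0 bs0 by simp
      moreover from ex[OF this, of 0] have "BFok 0 (bs 0) (bs (Suc 0))" unfolding bsS by (rule someI_ex)
      ultimately show ?case by blast
    next
      case (Suc n)
      then have "statep (fst (bs (Suc n))) (fst (snd (bs (Suc n)))) (snd (snd (bs (Suc n))))"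
        unfolding BFok_def by blast
      moreover from ex[OF this, of "Suc n"] have "BFok (Suc n) (bs (Suc n)) (bs (Suc (Suc n)))"
        unfolding bsS[of "Suc n"] by (rule someI_ex)
      ultimately show ?case by blast
    qed
  qed
  define Pn where "Pn n = fst (bs n)" for n
  define Qn where "Qn n = fst (snd (bs n))" for n
  define pn where "pn n = snd (snd (bs n))" for n
  have stn: "\<And>n. statep (Pn n) (Qn n) (pn n)" using inv unfolding Pn_def Qn_def pn_def by blast
  have okn: "\<And>n. Pn n \<subseteq> Pn (Suc n) \<and> Qn n \<subseteq> Qn (Suc n) \<and> (n \<in> s_carrier U \<longrightarrow> n \<in> Pn (Suc n) \<and> n \<in> Qn (Suc n)) \<and>
     (\<forall>x\<in>Pn n. pn (Suc n) x = pn n x)"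
    using inv unfolding Pn_def Qn_def pn_def BFok_def by blast
  have monoP: "\<And>m n. m \<le> n \<Longrightarrow> Pn m \<subseteq> Pn n"
  proof -
    fix m n :: nat assume "m \<le> n" then show "Pn m \<subseteq> Pn n"
    proof (induct n)
      case 0 then show ?case by simp
    next
      case (Suc n) then show ?case using okn[of n] by (auto simp: le_Suc_eq)
    qed
  qed
  have cons: "\<And>m n x. m \<le> n \<Longrightarrow> x \<in> Pn m \<Longrightarrow> pn n x = pn m x"
  proof -
    fix m n x assume "m \<le> n" "x \<in> Pn m"
    then show "pn n x = pn m x"
    proof (induct n)
      case 0 then show ?case by simp
    next
      case (Suc n)
      show ?case
      proof (cases "m \<le> n")
        case True
        then have "x \<in> Pn n" using monoP Suc(3) by blast
        then show ?thesis using okn[of n] Suc True by simp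
      next
        case False then have "m = Suc n" using Suc(2) by simp
        then show ?thesis by simp
      qed
    qed
  qed
  have cl: "\<And>n. closed fa U (Pn n)" using stn fgU_closed unfolding statep_def by blast
  have cov: "\<And>x. x \<in> s_carrier U \<Longrightarrow> x \<in> Pn (Suc x)" using okn by blast
  have em: "\<And>n. emb fa ra (restr ra U (Pn n)) U (pn n)"
  proof -
    fix n
    have "fgU (Pn n)" "fgU (Qn n)" "iso fa ra (restr ra U (Pn n)) (restr ra U (Qn n)) (pn n)"
      using stn[of n] unfolding statep_def by auto
    then show "emb fa ra (restr ra U (Pn n)) U (pn n)"
      using emb_into_restr[OF fgU_struc fgU_sub] iso_emb by blast
  qed
  define \<alpha> where "\<alpha> x = pn (Suc x) x" for x
  have ae: "emb fa ra U U \<alpha>" unfolding \<alpha>_def using chain_emb(1)[OF U_struc monoP cl cov em cons] .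
  have aeq: "\<And>n x. x \<in> Pn n \<Longrightarrow> \<alpha> x = pn n x" unfolding \<alpha>_def using chain_emb(2)[OF U_struc monoP cl cov em cons] .
  have surj: "s_carrier U \<subseteq> \<alpha> ` s_carrier U"
  proof
    fix y assume y: "y \<in> s_carrier U"
    then have yQ: "y \<in> Qn (Suc y)" using okn by blast
    have "pn (Suc y) ` Pn (Suc y) = Qn (Suc y)" using stn[of "Suc y"] unfolding statep_def by (simp add: iso_def)
    then obtain x where x: "x \<in> Pn (Suc y)" "y = pn (Suc y) x" using yQ by blast
    have "x \<in> s_carrier U" using x(1) cl[of "Suc y"] by (auto simp: closed_def)
    then show "y \<in> \<alpha> ` s_carrier U" using aeq[OF x(1)] x(2) by (metis image_eqI)
  qed
  have "\<alpha> ` s_carrier U \<subseteq> s_carrier U" using homD(1)[OF emb_hom[OF ae]] by blast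
  with surj have "\<alpha> ` s_carrier U = s_carrier U" by blast
  then have aut: "automorphism fa ra U \<alpha>" using ae by (simp add: automorphism_def iso_def)
  have "\<forall>x\<in>s_carrier U. rinf (\<alpha> x) = rinf x"
  proof
    fix x assume x: "x \<in> s_carrier U"
    then have "x \<in> Pn (Suc x)" using cov by blast
    then show "rinf (\<alpha> x) = rinf x" using stn[of "Suc x"] unfolding \<alpha>_def statep_def by blast
  qed
  moreover have "\<forall>x\<in>s_carrier A. \<alpha> x = \<iota>0 x"
  proof
    fix x assume "x \<in> s_carrier A"
    then have "x \<in> Pn 0" unfolding Pn_def bs0 P0_def by simp
    then have "\<alpha> x = pn 0 x" by (rule aeq)
    then show "\<alpha> x = \<iota>0 x" unfolding pn_def bs0 by simp
  qed
  ultimately show ?thesis using aut by blast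
qed

end

context fixes fa :: "'f \<Rightarrow> nat" and ra :: "'r \<Rightarrow> nat"
begin

lemma substruc_trans: "substruc fa ra X B \<Longrightarrow> substruc fa ra B U \<Longrightarrow> substruc fa ra X U"
proof -
  assume a: "substruc fa ra X B" and b: "substruc fa ra B U"
  have "emb fa ra X B id" "emb fa ra B U id" using a b by (auto simp: substruc_def)
  then have "emb fa ra X U (id \<circ> id)" by (rule emb_comp)
  then show ?thesis using a b by (auto simp: substruc_def)
qed

end

context rt
begin

lemma LR:
  assumes B: "substruc fa ra B U" and cB: "s_carrier B = Bs"
  shows "uh_retraction fa ra C U B rinf"
proof -
  have i1: "iso fa ra B RB id" using substruc_iso_restr[OF B] cB by simp
  have i2: "iso fa ra RB B id" using substruc_iso_restr'[OF B] cB by simp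
  have sB: "is_struc fa ra B" using B by (simp add: substruc_def)
  have Bcc: "B \<in> closure_class fa ra C"
    unfolding closure_class_def
  proof (intro CollectI conjI allI impI)
    show "is_struc fa ra B" by fact
    fix X assume "substruc fa ra X B \<and> fin_gen fa ra X"
    then have "IC X" using substruc_IC substruc_trans[OF _ B] by blast
    then show "\<exists>C'\<in>C. isomorphic fa ra X C'" by (simp add: inC_def)
  qed
  have hUB: "hom fa ra U B rinf" using hom_comp[OF rinf_hom emb_hom[OF iso_emb[OF i2]]] by simp
  have hBB: "hom fa ra B RB id" using emb_hom[OF iso_emb[OF i1]] .
  obtain \<iota> where io: "emb fa ra B U \<iota>" "\<forall>x\<in>s_carrier B. id x = rinf (\<iota> x)" using univ[OF Bcc hBB] by blast
  have ret: "retraction fa ra U B rinf" unfolding retraction_def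
    using hUB emb_hom[OF io(1)] io(2) by auto
  have c1: "\<forall>A\<in>closure_class fa ra C. \<forall>h. hom fa ra A B h \<longrightarrow>
        (\<exists>\<iota>. emb fa ra A U \<iota> \<and> (\<forall>x\<in>s_carrier A. h x = rinf (\<iota> x)))"
  proof (intro ballI allI impI)
    fix A h assume A: "A \<in> closure_class fa ra C" and h: "hom fa ra A B h"
    have "hom fa ra A RB (id \<circ> h)" using hom_comp[OF h hBB] .
    then show "\<exists>\<iota>. emb fa ra A U \<iota> \<and> (\<forall>x\<in>s_carrier A. h x = rinf (\<iota> x))" using univ[OF A] by simp
  qed
  have c2: "\<forall>A \<iota>. substruc fa ra A U \<and> fin_gen fa ra A \<and> emb fa ra A U \<iota> \<and>
        (\<forall>x\<in>s_carrier A. rinf (\<iota> x) = rinf x) \<longrightarrow>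
        (\<exists>\<alpha>. automorphism fa ra U \<alpha> \<and> (\<forall>x\<in>s_carrier U. rinf (\<alpha> x) = rinf x) \<and>
             (\<forall>x\<in>s_carrier A. \<alpha> x = \<iota> x))"
    using homog by blast
  show ?thesis unfolding uh_retraction_def using ret c1 c2 by blast
qed

end

context fr
begin

lemma C_cc: "Y \<in> C \<Longrightarrow> Y \<in> closure_class fa ra C"
  unfolding closure_class_def using fc C_struc unfolding fraisse_class_def is_age_def by blast

lemma U_retract: "retract fa ra U U"
  unfolding retract_def using substruc_refl[OF U_struc] emb_hom[OF emb_id'[of fa ra U]] by auto

lemma RL_HAP:
  assumes uh: "uh_retraction fa ra C U U r"
  shows "HAP fa ra C"
  unfolding HAP_def
proof (intro ballI allI impI)
  fix A B1 B2 f1 f2 assume A: "A \<in> C" and B1: "B1 \<in> C" and B2: "B2 \<in> C"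
    and ff: "emb fa ra A B1 f1 \<and> hom fa ra A B2 f2"
  have f1: "emb fa ra A B1 f1" and f2: "hom fa ra A B2 f2" using ff by auto
  have rU: "hom fa ra U U r" using uh by (simp add: uh_retraction_def retraction_def)
  have cl1: "\<forall>A\<in>closure_class fa ra C. \<forall>h. hom fa ra A U h \<longrightarrow>
        (\<exists>\<iota>. emb fa ra A U \<iota> \<and> (\<forall>x\<in>s_carrier A. h x = r (\<iota> x)))"
    using uh by (simp add: uh_retraction_def)
  obtain \<theta> where th: "emb fa ra B2 U \<theta>" using IC_emb[OF C_IC[OF B2]] by blast
  have "hom fa ra A U (\<theta> \<circ> f2)" using hom_comp[OF f2 emb_hom[OF th]] .
  then obtain \<iota> where io: "emb fa ra A U \<iota>" "\<forall>x\<in>s_carrier A. \<theta> (f2 x) = r (\<iota> x)"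
    using cl1 C_cc[OF A] by fastforce
  obtain \<chi> where ch: "emb fa ra B1 U \<chi>" "\<forall>x\<in>s_carrier A. \<chi> (f1 x) = \<iota> x"
    using EP[OF C_IC[OF A] C_IC[OF B1] f1 io(1)] by blast
  have sB1: "is_struc fa ra B1" and sB2: "is_struc fa ra B2" using C_struc B1 B2 by auto
  obtain G1 where G1: "finite G1" "G1 \<subseteq> s_carrier B1" "gen fa B1 G1 = s_carrier B1"
    using C_fg[OF B1] fin_gen_iff[OF sB1] by blast
  obtain G2 where G2: "finite G2" "G2 \<subseteq> s_carrier B2" "gen fa B2 G2 = s_carrier B2"
    using C_fg[OF B2] fin_gen_iff[OF sB2] by blast
  have rch: "hom fa ra B1 U (r \<circ> \<chi>)" using hom_comp[OF emb_hom[OF ch(1)] rU] .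
  define Cs where "Cs = gen fa U (\<theta> ` G2 \<union> (r \<circ> \<chi>) ` G1)"
  have gs: "\<theta> ` G2 \<union> (r \<circ> \<chi>) ` G1 \<subseteq> s_carrier U"
    using G1(2) G2(2) homD(1)[OF emb_hom[OF th]] homD(1)[OF rch] by blast
  have Cs: "fgU Cs" unfolding fgU_def Cs_def
  proof (rule exI[of _ "\<theta> ` G2 \<union> (r \<circ> \<chi>) ` G1"], intro conjI)
    show "finite (\<theta> ` G2 \<union> (r \<circ> \<chi>) ` G1)" using G1(1) G2(1) by simp
  qed (use gs in auto)
  have "\<theta> ` gen fa B2 G2 \<subseteq> gen fa U (\<theta> ` (G2 \<inter> s_carrier B2))" using hom_gen_image[OF emb_hom[OF th] sB2 U_struc] .
  moreover have "gen fa U (\<theta> ` G2) \<subseteq> Cs" unfolding Cs_def by (rule gen_mono) blast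
  ultimately have thC: "\<theta> ` s_carrier B2 \<subseteq> Cs" using G2 by (simp add: Int_absorb2)
  have "(r \<circ> \<chi>) ` gen fa B1 G1 \<subseteq> gen fa U ((r \<circ> \<chi>) ` (G1 \<inter> s_carrier B1))" using hom_gen_image[OF rch sB1 U_struc] .
  moreover have "gen fa U ((r \<circ> \<chi>) ` G1) \<subseteq> Cs" unfolding Cs_def by (rule gen_mono) blast
  ultimately have rchC: "(r \<circ> \<chi>) ` s_carrier B1 \<subseteq> Cs" using G1 by (simp add: Int_absorb2)
  obtain Cc \<psi> where Cc: "Cc \<in> C" "iso fa ra (restr ra U Cs) Cc \<psi>" by (rule IC_obtain[OF fgU_IC[OF Cs]])
  have e2: "emb fa ra B2 (restr ra U Cs) \<theta>" using emb_into_restr[OF sB2 fgU_sub[OF Cs]] th thC by blast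
  have h1: "hom fa ra B1 (restr ra U Cs) (r \<circ> \<chi>)" using hom_into_restr[OF sB1 fgU_sub[OF Cs]] rch rchC by blast
  have "emb fa ra B2 Cc (\<psi> \<circ> \<theta>)" using emb_comp[OF e2 iso_emb[OF Cc(2)]] .
  moreover have "hom fa ra B1 Cc (\<psi> \<circ> (r \<circ> \<chi>))" using hom_comp[OF h1 emb_hom[OF iso_emb[OF Cc(2)]]] .
  moreover have "\<forall>x\<in>s_carrier A. (\<psi> \<circ> (r \<circ> \<chi>)) (f1 x) = (\<psi> \<circ> \<theta>) (f2 x)" using ch(2) io(2) by simp
  ultimately show "\<exists>D\<in>C. \<exists>g1 g2. emb fa ra B2 D g2 \<and> hom fa ra B1 D g1 \<and>
            (\<forall>x\<in>s_carrier A. g1 (f1 x) = g2 (f2 x))" using Cc(1) by blast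
qed

end

context fr
begin

lemma RL_AEP:
  assumes uh: "uh_retraction fa ra C U U r"
  shows "amalgamated_extension fa ra C"
  unfolding amalgamated_extension_def
proof (intro ballI allI impI)
  fix A B1 B2 T f1 f2 h1 h2 assume A: "A \<in> C" and B1: "B1 \<in> C" and B2: "B2 \<in> C" and T: "T \<in> C"
    and hyp: "emb fa ra A B1 f1 \<and> emb fa ra A B2 f2 \<and> hom fa ra B1 T h1 \<and> hom fa ra B2 T h2 \<and>
        (\<forall>x\<in>s_carrier A. h1 (f1 x) = h2 (f2 x))"
  have f1: "emb fa ra A B1 f1" and f2: "emb fa ra A B2 f2" and h1: "hom fa ra B1 T h1"
    and h2: "hom fa ra B2 T h2" and eq: "\<forall>x\<in>s_carrier A. h1 (f1 x) = h2 (f2 x)" using hyp by auto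
  have rU: "hom fa ra U U r" using uh by (simp add: uh_retraction_def retraction_def)
  have cl1: "\<forall>A\<in>closure_class fa ra C. \<forall>h. hom fa ra A U h \<longrightarrow>
        (\<exists>\<iota>. emb fa ra A U \<iota> \<and> (\<forall>x\<in>s_carrier A. h x = r (\<iota> x)))"
    using uh by (simp add: uh_retraction_def)
  have cl2: "\<forall>A \<iota>. substruc fa ra A U \<and> fin_gen fa ra A \<and> emb fa ra A U \<iota> \<and>
        (\<forall>x\<in>s_carrier A. r (\<iota> x) = r x) \<longrightarrow>
        (\<exists>\<alpha>. automorphism fa ra U \<alpha> \<and> (\<forall>x\<in>s_carrier U. r (\<alpha> x) = r x) \<and>
             (\<forall>x\<in>s_carrier A. \<alpha> x = \<iota> x))"
    using uh by (simp add: uh_retraction_def)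
  have sA: "is_struc fa ra A" and sB1: "is_struc fa ra B1" and sB2: "is_struc fa ra B2" and sT: "is_struc fa ra T"
    using C_struc A B1 B2 T by auto
  obtain \<theta> where th: "emb fa ra T U \<theta>" using IC_emb[OF C_IC[OF T]] by blast
  have "hom fa ra B1 U (\<theta> \<circ> h1)" using hom_comp[OF h1 emb_hom[OF th]] .
  then obtain \<iota>1 where i1: "emb fa ra B1 U \<iota>1" "\<forall>x\<in>s_carrier B1. \<theta> (h1 x) = r (\<iota>1 x)"
    using cl1 C_cc[OF B1] by fastforce
  have "hom fa ra B2 U (\<theta> \<circ> h2)" using hom_comp[OF h2 emb_hom[OF th]] .
  then obtain \<iota>2 where i2: "emb fa ra B2 U \<iota>2" "\<forall>x\<in>s_carrier B2. \<theta> (h2 x) = r (\<iota>2 x)"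
    using cl1 C_cc[OF B2] by fastforce
  define k1 where "k1 = \<iota>1 \<circ> f1"
  have k1: "emb fa ra A U k1" unfolding k1_def using emb_comp[OF f1 i1(1)] .
  define A1 where "A1 = restr ra U (k1 ` s_carrier A)"
  have cA1: "closed fa U (k1 ` s_carrier A)" using hom_image_closed[OF emb_hom[OF k1] sA] .
  have sA1: "is_struc fa ra A1" unfolding A1_def using restr_is_struc[OF cA1] .
  have isA1: "iso fa ra A A1 k1" unfolding A1_def using emb_image_iso[OF k1 sA] .
  have subA1: "substruc fa ra A1 U" unfolding A1_def using restr_substruc[OF cA1] .
  have fgA1: "fin_gen fa ra A1" using iso_fin_gen[OF isA1 sA sA1 C_fg[OF A]] .
  define q where "q = inv_into (s_carrier A) k1"
  have iq: "iso fa ra A1 A q" unfolding q_def using iso_inv[OF isA1 sA1 sA] .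
  have qk: "\<And>a. a \<in> s_carrier A \<Longrightarrow> q (k1 a) = a" unfolding q_def using inv_into_f_f[OF emb_inj[OF k1]] .
  define \<iota> where "\<iota> = \<iota>2 \<circ> f2 \<circ> q"
  have ie: "emb fa ra A1 U \<iota>" unfolding \<iota>_def using emb_comp[OF iso_emb[OF iq] emb_comp[OF f2 i2(1)]]
    by (simp add: comp_assoc)
  have f1A: "\<And>a. a \<in> s_carrier A \<Longrightarrow> f1 a \<in> s_carrier B1" using homD(1)[OF emb_hom[OF f1]] .
  have f2A: "\<And>a. a \<in> s_carrier A \<Longrightarrow> f2 a \<in> s_carrier B2" using homD(1)[OF emb_hom[OF f2]] .
  have ic: "\<forall>x\<in>s_carrier A1. r (\<iota> x) = r x"
  proof
    fix y assume "y \<in> s_carrier A1"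
    then obtain a where a: "a \<in> s_carrier A" "y = k1 a" unfolding A1_def by auto
    have "r (\<iota> y) = r (\<iota>2 (f2 a))" unfolding \<iota>_def using qk[OF a(1)] a(2) by simp
    also have "\<dots> = \<theta> (h2 (f2 a))" using i2(2) f2A[OF a(1)] by simp
    also have "\<dots> = \<theta> (h1 (f1 a))" using eq a(1) by simp
    also have "\<dots> = r (\<iota>1 (f1 a))" using i1(2) f1A[OF a(1)] by simp
    finally show "r (\<iota> y) = r y" using a(2) unfolding k1_def by simp
  qed
  obtain \<alpha> where al: "automorphism fa ra U \<alpha>" "\<forall>x\<in>s_carrier U. r (\<alpha> x) = r x"
    "\<forall>x\<in>s_carrier A1. \<alpha> x = \<iota> x"
    using cl2 subA1 fgA1 ie ic by blast
  define G1 where "G1 = \<alpha> \<circ> \<iota>1"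
  have G1: "emb fa ra B1 U G1" unfolding G1_def using emb_comp[OF i1(1) automorphism_emb[OF al(1)]] .
  have G1r: "\<forall>x\<in>s_carrier B1. r (G1 x) = \<theta> (h1 x)"
    unfolding G1_def using al(2) i1(2) homD(1)[OF emb_hom[OF i1(1)]] by simp
  have G12: "\<forall>a\<in>s_carrier A. G1 (f1 a) = \<iota>2 (f2 a)"
  proof
    fix a assume a: "a \<in> s_carrier A"
    have "k1 a \<in> s_carrier A1" unfolding A1_def using a by simp
    then have "\<alpha> (k1 a) = \<iota> (k1 a)" using al(3) by blast
    then show "G1 (f1 a) = \<iota>2 (f2 a)" unfolding G1_def \<iota>_def k1_def using qk[OF a] k1_def by simp
  qed
  obtain GB1 where GB1: "finite GB1" "GB1 \<subseteq> s_carrier B1" "gen fa B1 GB1 = s_carrier B1"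
    using C_fg[OF B1] fin_gen_iff[OF sB1] by blast
  obtain GB2 where GB2: "finite GB2" "GB2 \<subseteq> s_carrier B2" "gen fa B2 GB2 = s_carrier B2"
    using C_fg[OF B2] fin_gen_iff[OF sB2] by blast
  obtain GT where GT: "finite GT" "GT \<subseteq> s_carrier T" "gen fa T GT = s_carrier T"
    using C_fg[OF T] fin_gen_iff[OF sT] by blast
  define X where "X = G1 ` GB1 \<union> \<iota>2 ` GB2"
  have X: "finite X" "X \<subseteq> s_carrier U" unfolding X_def
    using GB1 GB2 homD(1)[OF emb_hom[OF G1]] homD(1)[OF emb_hom[OF i2(1)]] by auto
  define Cs where "Cs = gen fa U X"
  have Cs: "fgU Cs" unfolding fgU_def Cs_def using X by blast
  have "G1 ` gen fa B1 GB1 \<subseteq> gen fa U (G1 ` (GB1 \<inter> s_carrier B1))" using hom_gen_image[OF emb_hom[OF G1] sB1 U_struc] .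
  moreover have "gen fa U (G1 ` GB1) \<subseteq> Cs" unfolding Cs_def X_def by (rule gen_mono) blast
  ultimately have G1C: "G1 ` s_carrier B1 \<subseteq> Cs" using GB1 by (simp add: Int_absorb2)
  have "\<iota>2 ` gen fa B2 GB2 \<subseteq> gen fa U (\<iota>2 ` (GB2 \<inter> s_carrier B2))" using hom_gen_image[OF emb_hom[OF i2(1)] sB2 U_struc] .
  moreover have "gen fa U (\<iota>2 ` GB2) \<subseteq> Cs" unfolding Cs_def X_def by (rule gen_mono) blast
  ultimately have G2C: "\<iota>2 ` s_carrier B2 \<subseteq> Cs" using GB2 by (simp add: Int_absorb2)
  define Y where "Y = \<theta> ` GT \<union> r ` X"
  have Y: "finite Y" "Y \<subseteq> s_carrier U" unfolding Y_def
    using GT X homD(1)[OF emb_hom[OF th]] homD(1)[OF rU] by auto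
  define Ts where "Ts = gen fa U Y"
  have Ts: "fgU Ts" unfolding fgU_def Ts_def using Y by blast
  have "\<theta> ` gen fa T GT \<subseteq> gen fa U (\<theta> ` (GT \<inter> s_carrier T))" using hom_gen_image[OF emb_hom[OF th] sT U_struc] .
  moreover have "gen fa U (\<theta> ` GT) \<subseteq> Ts" unfolding Ts_def Y_def by (rule gen_mono) blast
  ultimately have thT: "\<theta> ` s_carrier T \<subseteq> Ts" using GT by (simp add: Int_absorb2)
  have "r ` gen fa U X \<subseteq> gen fa U (r ` (X \<inter> s_carrier U))" using hom_gen_image[OF rU U_struc U_struc] .
  moreover have "gen fa U (r ` X) \<subseteq> Ts" unfolding Ts_def Y_def by (rule gen_mono) blast
  ultimately have rT: "r ` Cs \<subseteq> Ts" unfolding Cs_def using X by (simp add: Int_absorb2)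
  obtain Cc \<psi> where Cc: "Cc \<in> C" "iso fa ra (restr ra U Cs) Cc \<psi>"
    "iso fa ra Cc (restr ra U Cs) (inv_into Cs \<psi>)"
    "\<And>x. x \<in> Cs \<Longrightarrow> inv_into Cs \<psi> (\<psi> x) = x"
    using IC_obtain[OF fgU_IC[OF Cs]] by (metis restr_simps(1))
  obtain Tc \<psi>' where Tc: "Tc \<in> C" "iso fa ra (restr ra U Ts) Tc \<psi>'" by (rule IC_obtain[OF fgU_IC[OF Ts]])
  have sCs: "is_struc fa ra (restr ra U Cs)" using fgU_struc[OF Cs] .
  have e1: "emb fa ra B1 (restr ra U Cs) G1" using emb_into_restr[OF sB1 fgU_sub[OF Cs]] G1 G1C by blast
  have e2: "emb fa ra B2 (restr ra U Cs) \<iota>2" using emb_into_restr[OF sB2 fgU_sub[OF Cs]] i2(1) G2C by blast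
  have ek: "emb fa ra T (restr ra U Ts) \<theta>" using emb_into_restr[OF sT fgU_sub[OF Ts]] th thT by blast
  have hr: "hom fa ra (restr ra U Cs) (restr ra U Ts) r"
    using hom_into_restr[OF sCs fgU_sub[OF Ts]] hom_from_restr[OF fgU_sub[OF Cs] rU] rT by simp
  define hh where "hh = \<psi>' \<circ> r \<circ> inv_into Cs \<psi>"
  have hhh: "hom fa ra Cc Tc hh" unfolding hh_def
    using hom_comp[OF hom_comp[OF emb_hom[OF iso_emb[OF Cc(3)]] hr] emb_hom[OF iso_emb[OF Tc(2)]]]
    by (simp add: comp_assoc)
  have g1: "emb fa ra B1 Cc (\<psi> \<circ> G1)" using emb_comp[OF e1 iso_emb[OF Cc(2)]] .
  have g2: "emb fa ra B2 Cc (\<psi> \<circ> \<iota>2)" using emb_comp[OF e2 iso_emb[OF Cc(2)]] .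
  have kk: "emb fa ra T Tc (\<psi>' \<circ> \<theta>)" using emb_comp[OF ek iso_emb[OF Tc(2)]] .
  have agree: "\<forall>x\<in>s_carrier A. (\<psi> \<circ> G1) (f1 x) = (\<psi> \<circ> \<iota>2) (f2 x)" using G12 by simp
  have c1: "\<forall>x\<in>s_carrier B1. hh ((\<psi> \<circ> G1) x) = (\<psi>' \<circ> \<theta>) (h1 x)"
  proof
    fix x assume x: "x \<in> s_carrier B1"
    have "G1 x \<in> Cs" using G1C x by blast
    then show "hh ((\<psi> \<circ> G1) x) = (\<psi>' \<circ> \<theta>) (h1 x)" unfolding hh_def using Cc(4) G1r x by simp
  qed
  have c2: "\<forall>x\<in>s_carrier B2. hh ((\<psi> \<circ> \<iota>2) x) = (\<psi>' \<circ> \<theta>) (h2 x)"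
  proof
    fix x assume x: "x \<in> s_carrier B2"
    have "\<iota>2 x \<in> Cs" using G2C x by blast
    then show "hh ((\<psi> \<circ> \<iota>2) x) = (\<psi>' \<circ> \<theta>) (h2 x)" unfolding hh_def using Cc(4) i2(2) x by simp
  qed
  show "\<exists>CC\<in>C. \<exists>T'\<in>C. \<exists>g1 g2 k h.
            emb fa ra B1 CC g1 \<and> emb fa ra B2 CC g2 \<and>
            (\<forall>x\<in>s_carrier A. g1 (f1 x) = g2 (f2 x)) \<and>
            emb fa ra T T' k \<and> hom fa ra CC T' h \<and>
            (\<forall>x\<in>s_carrier B1. h (g1 x) = k (h1 x)) \<and>
            (\<forall>x\<in>s_carrier B2. h (g2 x) = k (h2 x))"
    using Cc(1) Tc(1) g1 g2 agree kk hhh c1 c2 by blast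
qed

end

theorem corollary4p9:
  fixes fa :: "'f \<Rightarrow> nat" and ra :: "'r \<Rightarrow> nat"
    and \<C> :: "('f, 'r) cstruc set" and U :: "('f, 'r) cstruc"
  assumes "fraisse_class fa ra \<C>"
    and "fraisse_limit fa ra \<C> U"
  shows "(HAP fa ra \<C> \<and> amalgamated_extension fa ra \<C>) \<longleftrightarrow>
         (\<forall>B. retract fa ra U B \<longrightarrow> (\<exists>r. uh_retraction fa ra \<C> U B r))"
proof -
  interpret fr fa ra \<C> U using assms by unfold_locales
  show ?thesis
  proof
    assume L: "HAP fa ra \<C> \<and> amalgamated_extension fa ra \<C>"
    show "\<forall>B. retract fa ra U B \<longrightarrow> (\<exists>r. uh_retraction fa ra \<C> U B r)"
    proof (intro allI impI)
      fix B assume "retract fa ra U B"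
      then obtain e where B: "substruc fa ra B U" and e: "hom fa ra U U e" "\<forall>x\<in>s_carrier U. e (e x) = e x"
        "e ` s_carrier U = s_carrier B" unfolding retract_def by blast
      interpret rt fa ra \<C> U "s_carrier B" e
        by unfold_locales (use L e in auto)
      show "\<exists>r. uh_retraction fa ra \<C> U B r" using LR[OF B] by blast
    qed
  next
    assume R: "\<forall>B. retract fa ra U B \<longrightarrow> (\<exists>r. uh_retraction fa ra \<C> U B r)"
    then obtain r where "uh_retraction fa ra \<C> U U r" using U_retract by blast
    then show "HAP fa ra \<C> \<and> amalgamated_extension fa ra \<C>" using RL_HAP RL_AEP by blast
  qed
qed


end
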